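(* In the setting below, the map $\phi:\mathcal{F}(\mathcal{P}_\lambda)\to\mathcal{F}(\Gamma_{\mathbf{k}})$ is an isomorphism of posets (with both sides ordered by inclusion), and $\dim\phi(F)=\dim F$ for every face $F$ of $\mathcal{P}_\lambda$.
   Context: Let $\mathbf{k}=(k_1,\dots,k_s)$ be positive integers with sum $n$, $n_0=0$, $n_i=\sum_{j\le i}k_j$, and $\lambda=(\lambda_1,\dots,\lambda_n)$ real with $\lambda_1=\cdots=\lambda_{n_1}>\lambda_{n_1+1}=\cdots=\lambda_{n_2}>\cdots>\lambda_{n_{s-1}+1}=\cdots=\lambda_n$. Let $I=\{(i,j)\in\mathbb{Z}^2:i,j\ge1,i+j\le n\}$; $\mathcal{P}_\lambda=\{x=(x_{i,j})_{(i,j)\in I}: x_{i,j+1}\ge x_{i,j}\ge x_{i+1,j}\ \forall (i,j)\in I\}$ with $x_{i,n+1-i}:=\lambda_i$; $\mathcal{F}(\mathcal{P}_\lambda)$ is its set of nonempty faces. $Q^+$ is the directed graph on $\mathbb{Z}_{\ge0}^2$ with edges $((i,j),(i,j+1))$, $((i,j),(i+1,j))$. Terminal vertices $T_{\mathbf{k}}=\{(n_\ell,n-n_\ell):0\le\ell\le s\}$; $\Gamma_{\mathbf{k}}$ is the induced subgraph of $Q^+$ on $\{(a,b):a\le c,b\le d\text{ for some }(c,d)\in T_{\mathbf{k}}\}$. A positive path is a shortest directed path in $\Gamma_{\mathbf{k}}$ from $(0,0)$ to a terminal vertex. A face of $\Gamma_{\mathbf{k}}$ is a subgraph containing all terminal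 vertices that is a union of positive paths; $\mathcal{F}(\Gamma_{\mathbf{k}})$ is the set of faces; the dimension of a face $\gamma$ is $\operatorname{rank}H_1(\gamma)$ viewing $\gamma$ as a 1-dimensional CW complex. For a face $F$ of $\mathcal{P}_\lambda$, $\phi(F)$ is the subgraph of $Q^+$ whose edges are: all $((0,i),(0,i+1))$ and $((i,0),(i+1,0))$, $0\le i\le n-1$; $((i-1,j),(i,j))$ for $(i,j)\in I$ whenever some $x\in F$ has $x_{i,j}<x_{i,j+1}$; $((i,j-1),(i,j))$ for $(i,j)\in I$ whenever some $x\in F$ has $x_{i,j}>x_{i+1,j}$; its vertices are the endpoints of these edges. *)

theory Defs
  imports "HOL-Analysis.Analysis" "HOL-Library.Function_Algebras"
begin

instantiation "fun" :: (type, real_vector) real_vector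
begin
definition scaleR_fun_def: "scaleR r f = (\<lambda>x. r *\<^sub>R f x)"
instance
  by standard (simp_all add: scaleR_fun_def fun_eq_iff scaleR_add_right scaleR_add_left)
end

text \<open>Points of the polytope are functions x :: nat * nat => real, with x (i,j) the
coordinate x_{i,j} for (i,j) in I, and all other coordinates fixed to 0, so that
the polytope lives in a copy of R^I.\<close>

definition GT_index :: "nat \<Rightarrow> (nat \<times> nat) set" where
  "GT_index n = {(i, j). 1 \<le> i \<and> 1 \<le> j \<and> i + j \<le> n}"

text \<open>Extension by the boundary values x_{i,n+1-i} := lambda_i.\<close>
definition GT_ext :: "nat \<Rightarrow> (nat \<Rightarrow> real) \<Rightarrow> (nat \<times> nat \<Rightarrow> real) \<Rightarrow> nat \<times> nat \<Rightarrow> real" where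
  "GT_ext n lam x = (\<lambda>(i, j). if i + j = n + 1 then lam i else x (i, j))"

definition GT_polytope :: "nat \<Rightarrow> (nat \<Rightarrow> real) \<Rightarrow> (nat \<times> nat \<Rightarrow> real) set" where
  "GT_polytope n lam =
     {x. (\<forall>p. p \<notin> GT_index n \<longrightarrow> x p = 0) \<and>
         (\<forall>(i, j) \<in> GT_index n.
            GT_ext n lam x (i, j + 1) \<ge> GT_ext n lam x (i, j) \<and>
            GT_ext n lam x (i, j) \<ge> GT_ext n lam x (i + 1, j))}"

definition nonempty_faces :: "'a::real_vector set \<Rightarrow> 'a set set" where
  "nonempty_faces P = {F. F face_of P \<and> F \<noteq> {}}"

definition affine_dim :: "'a::real_vector set \<Rightarrow> nat" where
  "affine_dim F = dim {y - x | x y. x \<in> F \<and> y \<in> F}"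

type_synonym vgraph = "(nat \<times> nat) set \<times> ((nat \<times> nat) \<times> (nat \<times> nat)) set"

definition subgraph_le :: "vgraph \<Rightarrow> vgraph \<Rightarrow> bool" where
  "subgraph_le g h \<longleftrightarrow> fst g \<subseteq> fst h \<and> snd g \<subseteq> snd h"

definition Qplus_edges :: "((nat \<times> nat) \<times> (nat \<times> nat)) set" where
  "Qplus_edges = {((i, j), (i, j + 1)) | i j. True} \<union> {((i, j), (i + 1, j)) | i j. True}"

definition psum :: "nat list \<Rightarrow> nat \<Rightarrow> nat" where
  "psum k l = sum_list (take l k)"

definition terminals :: "nat list \<Rightarrow> (nat \<times> nat) set" where
  "terminals k = {(psum k l, sum_list k - psum k l) | l. l \<le> length k}"

definition Gamma_vertices :: "nat list \<Rightarrow> (nat \<times> nat) set" where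
  "Gamma_vertices k = {(a, b). \<exists>(c, d) \<in> terminals k. a \<le> c \<and> b \<le> d}"

definition Gamma_edges :: "nat list \<Rightarrow> ((nat \<times> nat) \<times> (nat \<times> nat)) set" where
  "Gamma_edges k = {(u, v) \<in> Qplus_edges. u \<in> Gamma_vertices k \<and> v \<in> Gamma_vertices k}"

definition Gamma_path :: "nat list \<Rightarrow> (nat \<times> nat) list \<Rightarrow> bool" where
  "Gamma_path k vs \<longleftrightarrow> vs \<noteq> [] \<and> set vs \<subseteq> Gamma_vertices k \<and>
     (\<forall>i. Suc i < length vs \<longrightarrow> (vs ! i, vs ! Suc i) \<in> Gamma_edges k)"

definition path_graph :: "(nat \<times> nat) list \<Rightarrow> vgraph" where
  "path_graph vs = (set vs, {(vs ! i, vs ! Suc i) | i. Suc i < length vs})"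

definition positive_path :: "nat list \<Rightarrow> (nat \<times> nat) list \<Rightarrow> bool" where
  "positive_path k vs \<longleftrightarrow> Gamma_path k vs \<and> hd vs = (0, 0) \<and> last vs \<in> terminals k \<and>
     (\<forall>ws. Gamma_path k ws \<and> hd ws = (0, 0) \<and> last ws = last vs \<longrightarrow> length vs \<le> length ws)"

definition Gamma_faces :: "nat list \<Rightarrow> vgraph set" where
  "Gamma_faces k = {g. terminals k \<subseteq> fst g \<and>
     (\<exists>Ps. (\<forall>vs\<in>Ps. positive_path k vs) \<and>
          fst g = (\<Union>vs\<in>Ps. fst (path_graph vs)) \<and>
          snd g = (\<Union>vs\<in>Ps. snd (path_graph vs)))}"

text \<open>Rank of H_1 of a finite graph viewed as a 1-dimensional CW complex:
#edges - #vertices + #connected components.\<close>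
definition graph_components :: "vgraph \<Rightarrow> (nat \<times> nat) set set" where
  "graph_components g =
     fst g // {(u, v). u \<in> fst g \<and> v \<in> fst g \<and> (u, v) \<in> (snd g \<union> (snd g)\<inverse>)\<^sup>*}"

definition graph_dim :: "vgraph \<Rightarrow> int" where
  "graph_dim g = int (card (snd g)) - int (card (fst g)) + int (card (graph_components g))"

definition phi :: "nat \<Rightarrow> (nat \<Rightarrow> real) \<Rightarrow> (nat \<times> nat \<Rightarrow> real) set \<Rightarrow> vgraph" where
  "phi n lam F =
     (let E = {((0, i), (0, i + 1)) | i. i \<le> n - 1} \<union> {((i, 0), (i + 1, 0)) | i. i \<le> n - 1}
            \<union> {((i - 1, j), (i, j)) | i j. (i, j) \<in> GT_index n \<and>
                   (\<exists>x\<in>F. GT_ext n lam x (i, j) < GT_ext n lam x (i, j + 1))}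
            \<union> {((i, j - 1), (i, j)) | i j. (i, j) \<in> GT_index n \<and>
                   (\<exists>x\<in>F. GT_ext n lam x (i, j) > GT_ext n lam x (i + 1, j))}
      in ({u. \<exists>v. (u, v) \<in> E} \<union> {v. \<exists>u. (u, v) \<in> E}, E))"

end

theory Submission
  imports Defs
begin


lemma sum_fun_apply: "(sum (f::'b \<Rightarrow> 'a \<Rightarrow> real) A) x = (\<Sum>a\<in>A. f a x)"
  by (induction A rule: infinite_finite_induct) auto

lemma scaleR_fun_apply[simp]: "(c *\<^sub>R (f::'a\<Rightarrow>real)) x = c * f x"
  by (simp add: scaleR_fun_def)

datatype con = CA nat nat | CB nat nat

fun cell :: "con \<Rightarrow> nat \<times> nat" where
  "cell (CA i j) = (i,j)" | "cell (CB i j) = (i,j)"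

fun edge :: "con \<Rightarrow> (nat \<times> nat) \<times> (nat \<times> nat)" where
  "edge (CA i j) = ((i-1,j),(i,j))" | "edge (CB i j) = ((i,j-1),(i,j))"

definition ends :: "((nat \<times> nat) \<times> (nat \<times> nat)) set \<Rightarrow> (nat \<times> nat) set" where
  "ends E = {u. \<exists>v. (u, v) \<in> E} \<union> {v. \<exists>u. (u, v) \<in> E}"

locale GT =
  fixes k :: "nat list" and lam :: "nat \<Rightarrow> real" and n :: nat
  assumes kne: "k \<noteq> []"
    and kpos: "\<forall>a \<in> set k. 0 < a"
    and n_def: "n = sum_list k"
    and blk: "\<forall>l \<in> {1..length k}. \<forall>a \<in> {psum k (l - 1) <.. psum k l}. \<forall>b \<in> {psum k (l - 1) <.. psum k l}.
           lam a = lam b"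
    and stp: "\<forall>l \<in> {1..<length k}. lam (psum k l) > lam (psum k l + 1)"
begin

abbreviation "I \<equiv> GT_index n"
abbreviation "P \<equiv> GT_polytope n lam"

definition v :: "(nat \<times> nat \<Rightarrow> real) \<Rightarrow> nat \<times> nat \<Rightarrow> real" where
  "v x = GT_ext n lam x"

definition hv :: "(nat \<times> nat \<Rightarrow> real) \<Rightarrow> nat \<times> nat \<Rightarrow> real" where
  "hv w = (\<lambda>(i,j). if i + j = n + 1 then 0 else w (i,j))"

fun lo :: "(nat \<times> nat \<Rightarrow> real) \<Rightarrow> con \<Rightarrow> real" where
  "lo x (CA i j) = v x (i,j)" | "lo x (CB i j) = v x (i+1,j)"
fun hi :: "(nat \<times> nat \<Rightarrow> real) \<Rightarrow> con \<Rightarrow> real" where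
  "hi x (CA i j) = v x (i,j+1)" | "hi x (CB i j) = v x (i,j)"
fun hlo :: "(nat \<times> nat \<Rightarrow> real) \<Rightarrow> con \<Rightarrow> real" where
  "hlo x (CA i j) = hv x (i,j)" | "hlo x (CB i j) = hv x (i+1,j)"
fun hhi :: "(nat \<times> nat \<Rightarrow> real) \<Rightarrow> con \<Rightarrow> real" where
  "hhi x (CA i j) = hv x (i,j+1)" | "hhi x (CB i j) = hv x (i,j)"

definition Cs :: "con set" where "Cs = {c. cell c \<in> I}"

definition str :: "(nat \<times> nat \<Rightarrow> real) set \<Rightarrow> con set" where
  "str F = {c \<in> Cs. \<exists>x\<in>F. lo x c < hi x c}"

definition FS :: "con set \<Rightarrow> (nat \<times> nat \<Rightarrow> real) set" where
  "FS S = {y \<in> P. \<forall>c \<in> Cs - S. lo y c = hi y c}"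

lemma I_iff: "(i,j) \<in> I \<longleftrightarrow> 1 \<le> i \<and> 1 \<le> j \<and> i + j \<le> n"
  by (simp add: GT_index_def)

lemma finite_I: "finite I"
proof -
  have "I \<subseteq> {0..n} \<times> {0..n}" by (auto simp: GT_index_def)
  then show ?thesis using finite_subset by blast
qed

lemma finite_Cs: "finite Cs"
proof -
  have "Cs \<subseteq> (\<lambda>(i,j). CA i j) ` I \<union> (\<lambda>(i,j). CB i j) ` I"
  proof
    fix c assume c: "c \<in> Cs" show "c \<in> (\<lambda>(i,j). CA i j) ` I \<union> (\<lambda>(i,j). CB i j) ` I"
    proof (cases c)
      case (CA i j) then have "(i,j) \<in> I" using c by (simp add: Cs_def)
      then show ?thesis using CA by (auto intro: image_eqI[where x="(i,j)"])
    next
      case (CB i j) then have "(i,j) \<in> I" using c by (simp add: Cs_def)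
      then show ?thesis using CB by (auto intro: image_eqI[where x="(i,j)"])
    qed
  qed
  then show ?thesis using finite_I finite_subset by blast
qed

lemma P_iff: "x \<in> P \<longleftrightarrow> (\<forall>p. p \<notin> I \<longrightarrow> x p = 0) \<and> (\<forall>c\<in>Cs. lo x c \<le> hi x c)"
proof
  assume x: "x \<in> P"
  show "(\<forall>p. p \<notin> I \<longrightarrow> x p = 0) \<and> (\<forall>c\<in>Cs. lo x c \<le> hi x c)"
  proof (intro conjI ballI)
    show "\<forall>p. p \<notin> I \<longrightarrow> x p = 0" using x by (simp add: GT_polytope_def)
    fix c assume "c \<in> Cs" then show "lo x c \<le> hi x c" using x
      by (cases c) (fastforce simp: GT_polytope_def Cs_def v_def)+
  qed
next
  assume a: "(\<forall>p. p \<notin> I \<longrightarrow> x p = 0) \<and> (\<forall>c\<in>Cs. lo x c \<le> hi x c)"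
  have "\<forall>(i, j) \<in> I. GT_ext n lam x (i, j + 1) \<ge> GT_ext n lam x (i, j) \<and>
            GT_ext n lam x (i, j) \<ge> GT_ext n lam x (i + 1, j)"
  proof (clarify)
    fix i j assume "(i,j) \<in> I"
    then have "CA i j \<in> Cs" "CB i j \<in> Cs" by (auto simp: Cs_def)
    then show "GT_ext n lam x (i, j + 1) \<ge> GT_ext n lam x (i, j) \<and>
            GT_ext n lam x (i, j) \<ge> GT_ext n lam x (i + 1, j)" using a by (fastforce simp: v_def)
  qed
  then show "x \<in> P" using a by (simp add: GT_polytope_def)
qed

lemma v_comb: "v ((1 - t) *\<^sub>R x + t *\<^sub>R y) c = (1 - t) * v x c + t * v y c"
  by (cases c) (simp add: v_def GT_ext_def algebra_simps)

lemma lo_comb: "lo ((1 - t) *\<^sub>R x + t *\<^sub>R y) c = (1 - t) * lo x c + t * lo y c"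
  by (cases c) (simp_all add: v_comb)
lemma hi_comb: "hi ((1 - t) *\<^sub>R x + t *\<^sub>R y) c = (1 - t) * hi x c + t * hi y c"
  by (cases c) (simp_all add: v_comb)

lemma v_pert: "v (x + e *\<^sub>R w) c = v x c + e * hv w c"
  by (cases c) (simp add: v_def hv_def GT_ext_def algebra_simps)
lemma lo_pert: "lo (x + e *\<^sub>R w) c = lo x c + e * hlo w c"
  by (cases c) (simp_all add: v_pert)
lemma hi_pert: "hi (x + e *\<^sub>R w) c = hi x c + e * hhi w c"
  by (cases c) (simp_all add: v_pert)

lemma v_diff: "v y c - v x c = hv (y - x) c"
  by (cases c) (simp add: v_def hv_def GT_ext_def algebra_simps)
lemma lo_diff: "lo y c - lo x c = hlo (y - x) c"
  by (cases c) (simp_all add: v_diff)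
lemma hi_diff: "hi y c - hi x c = hhi (y - x) c"
  by (cases c) (simp_all add: v_diff)

lemma convex_FS: "convex (FS S)"
proof (rule convexI)
  fix x y and a b :: real assume xy: "x \<in> FS S" "y \<in> FS S" and ab: "0 \<le> a" "0 \<le> b" "a + b = 1"
  have a: "a = 1 - b" using ab by simp
  let ?z = "(1 - b) *\<^sub>R x + b *\<^sub>R y"
  have "\<forall>p. p \<notin> I \<longrightarrow> ?z p = 0" using xy by (simp add: FS_def P_iff)
  moreover have "\<forall>c\<in>Cs. lo ?z c \<le> hi ?z c"
  proof
    fix c assume "c \<in> Cs"
    then have "lo x c \<le> hi x c" "lo y c \<le> hi y c" using xy by (auto simp: FS_def P_iff)
    then show "lo ?z c \<le> hi ?z c" unfolding lo_comb hi_comb using ab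
      by (smt (verit) mult_left_mono)
  qed
  moreover have "\<forall>c\<in>Cs - S. lo ?z c = hi ?z c" using xy
    by (simp add: FS_def lo_comb hi_comb)
  ultimately show "a *\<^sub>R x + b *\<^sub>R y \<in> FS S" unfolding a by (simp add: FS_def P_iff)
qed

lemma FS_face: "FS S face_of P"
  unfolding face_of_def
proof (intro conjI ballI impI)
  show "FS S \<subseteq> P" by (auto simp: FS_def)
  show "convex (FS S)" by (rule convex_FS)
  fix a b x assume ab: "a \<in> P" "b \<in> P" and x: "x \<in> FS S" and seg: "x \<in> open_segment a b"
  obtain u where u: "0 < u" "u < 1" "x = (1 - u) *\<^sub>R a + u *\<^sub>R b" using seg by (auto simp: in_segment)
  have tight: "lo a c = hi a c \<and> lo b c = hi b c" if c: "c \<in> Cs - S" for c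
  proof -
    have "lo a c \<le> hi a c" "lo b c \<le> hi b c" using ab c by (auto simp: P_iff)
    moreover have "lo x c = hi x c" using x c by (auto simp: FS_def)
    then have "(1 - u) * lo a c + u * lo b c = (1 - u) * hi a c + u * hi b c"
      using u by (simp add: lo_comb hi_comb)
    ultimately show ?thesis using u
      by (smt (verit, best) mult_less_cancel_left_pos mult_left_mono)
  qed
  show "a \<in> FS S" "b \<in> FS S" using ab tight by (auto simp: FS_def)
qed

lemma str_sub: "str F \<subseteq> Cs" by (auto simp: str_def)

lemma strict_point:
  assumes F: "F face_of P" "F \<noteq> {}"
  shows "\<exists>z\<in>F. \<forall>c\<in>str F. lo z c < hi z c"
proof -
  have fin: "finite (str F)" using finite_Cs str_sub finite_subset by blast
  have conv: "convex F" using F face_of_imp_convex by blast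
  have FP: "F \<subseteq> P" using F face_of_imp_subset by blast
  have "\<forall>A. A \<subseteq> str F \<longrightarrow> (\<exists>z\<in>F. \<forall>c\<in>A. lo z c < hi z c)"
  proof (intro allI impI)
    fix A assume A: "A \<subseteq> str F"
    then have "finite A" using fin finite_subset by blast
    then show "\<exists>z\<in>F. \<forall>c\<in>A. lo z c < hi z c" using A
    proof (induction A rule: finite_induct)
      case empty then show ?case using F by auto
    next
      case (insert c A)
      then obtain z where z: "z \<in> F" "\<forall>c\<in>A. lo z c < hi z c" by auto
      from insert have "c \<in> str F" by auto
      then obtain y where y: "y \<in> F" "lo y c < hi y c" "c \<in> Cs" by (auto simp: str_def)
      define m where "m = (1/2::real) *\<^sub>R z + (1/2::real) *\<^sub>R y"
      have mF: "m \<in> F" unfolding m_def using conv z(1) y(1) by (rule convexD) auto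
      have "\<forall>d\<in>insert c A. lo m d < hi m d"
      proof
        fix d assume d: "d \<in> insert c A"
        then have dC: "d \<in> Cs" using insert y by (auto simp: str_def)
        have "lo z d \<le> hi z d" "lo y d \<le> hi y d" using z y FP dC by (auto simp: P_iff)
        moreover have "lo z d < hi z d \<or> lo y d < hi y d" using d z y by auto
        moreover have "lo m d = (1/2) * lo z d + (1/2) * lo y d" 
          using lo_comb[of "1/2" z y d] by (simp add: m_def)
        moreover have "hi m d = (1/2) * hi z d + (1/2) * hi y d" 
          using hi_comb[of "1/2" z y d] by (simp add: m_def)
        ultimately show "lo m d < hi m d" by linarith
      qed
      then show ?case using mF by blast
    qed
  qed
  then show ?thesis by blast
qed

lemma pert:
  assumes S: "S \<subseteq> Cs" and z: "z \<in> P" "\<forall>c\<in>S. lo z c < hi z c" "\<forall>c\<in>Cs - S. lo z c = hi z c"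
    and w: "\<forall>p. p \<notin> I \<longrightarrow> w p = 0" "\<forall>c\<in>Cs - S. hlo w c = hhi w c"
  shows "\<exists>e>0. z + e *\<^sub>R w \<in> FS S"
proof -
  have fin: "finite S" using finite_Cs S finite_subset by blast
  have "\<forall>c\<in>S. eventually (\<lambda>e. 0 < (hi z c - lo z c) + e * (hhi w c - hlo w c)) (at_right (0::real))"
  proof
    fix c assume c: "c \<in> S"
    have "((\<lambda>e. (hi z c - lo z c) + e * (hhi w c - hlo w c)) \<longlongrightarrow> (hi z c - lo z c) + 0 * (hhi w c - hlo w c)) (at_right (0::real))"
      by (intro tendsto_intros)
    then show "eventually (\<lambda>e. 0 < (hi z c - lo z c) + e * (hhi w c - hlo w c)) (at_right (0::real))"
      using z c by (intro order_tendstoD(1)) auto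
  qed
  then have "eventually (\<lambda>e. \<forall>c\<in>S. 0 < (hi z c - lo z c) + e * (hhi w c - hlo w c)) (at_right (0::real))"
    using fin by (intro eventually_ball_finite) auto
  then obtain b where b: "b > 0" "\<forall>e>0. e < b \<longrightarrow> (\<forall>c\<in>S. 0 < (hi z c - lo z c) + e * (hhi w c - hlo w c))"
    by (auto simp: eventually_at_right_field)
  define e where "e = b / 2"
  have e: "e > 0" "e < b" using b by (auto simp: e_def)
  have "z + e *\<^sub>R w \<in> FS S"
    unfolding FS_def P_iff
  proof (intro CollectI conjI ballI allI impI)
    fix p assume "p \<notin> I" then show "(z + e *\<^sub>R w) p = 0" using z w by (cases p) (simp add: P_iff)
  next
    fix c assume c: "c \<in> Cs"
    show "lo (z + e *\<^sub>R w) c \<le> hi (z + e *\<^sub>R w) c"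
    proof (cases "c \<in> S")
      case True then show ?thesis using b e by (force simp: lo_pert hi_pert algebra_simps)
    next
      case False then show ?thesis using z w c by (simp add: lo_pert hi_pert)
    qed
  next
    fix c assume c: "c \<in> Cs - S"
    then show "lo (z + e *\<^sub>R w) c = hi (z + e *\<^sub>R w) c" using z w by (simp add: lo_pert hi_pert)
  qed
  then show ?thesis using e by blast
qed

lemma face_char:
  assumes F: "F face_of P" "F \<noteq> {}"
  shows "F = FS (str F)"
proof
  have FP: "F \<subseteq> P" using F face_of_imp_subset by blast
  show "F \<subseteq> FS (str F)"
  proof
    fix y assume y: "y \<in> F"
    have "\<forall>c\<in>Cs - str F. lo y c = hi y c"
    proof
      fix c assume c: "c \<in> Cs - str F"
      then have "lo y c \<le> hi y c" using y FP by (auto simp: P_iff)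
      moreover have "\<not> lo y c < hi y c" using c y by (auto simp: str_def)
      ultimately show "lo y c = hi y c" by simp
    qed
    then show "y \<in> FS (str F)" using y FP by (auto simp: FS_def)
  qed
  show "FS (str F) \<subseteq> F"
  proof
    fix y assume y: "y \<in> FS (str F)"
    obtain z where z: "z \<in> F" "\<forall>c\<in>str F. lo z c < hi z c" using strict_point[OF F] by blast
    have zP: "z \<in> P" using z FP by auto
    have zt: "\<forall>c\<in>Cs - str F. lo z c = hi z c"
    proof
      fix c assume c: "c \<in> Cs - str F"
      then have "lo z c \<le> hi z c" using zP by (auto simp: P_iff)
      moreover have "\<not> lo z c < hi z c" using c z by (auto simp: str_def)
      ultimately show "lo z c = hi z c" by simp
    qed
    have yP: "y \<in> P" using y by (auto simp: FS_def)
    have w1: "\<forall>p. p \<notin> I \<longrightarrow> (z - y) p = 0" using zP yP by (simp add: P_iff)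
    have w2: "\<forall>c\<in>Cs - str F. hlo (z - y) c = hhi (z - y) c"
      using zt y by (auto simp: FS_def simp flip: lo_diff hi_diff)
    obtain e where e: "e > 0" "z + e *\<^sub>R (z - y) \<in> FS (str F)"
      using pert[OF str_sub zP z(2) zt w1 w2] by blast
    define u where "u = z + e *\<^sub>R (z - y)"
    have uP: "u \<in> P" using e by (auto simp: u_def FS_def)
    show "y \<in> F"
    proof (cases "z = y")
      case True then show ?thesis using z by simp
    next
      case False
      then obtain p where p: "z p \<noteq> y p" by (auto simp: fun_eq_iff)
      have uy: "u \<noteq> y"
      proof
        assume "u = y"
        then have "z p + e * (z p - y p) = y p" by (cases p) (simp add: u_def fun_eq_iff)
        then have "(1 + e) * (z p - y p) = 0" by (simp add: algebra_simps)
        then show False using e p by simp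
      qed
      have "z = (1 - e/(1+e)) *\<^sub>R u + (e/(1+e)) *\<^sub>R y"
      proof (rule ext)
        fix q
        have ne: "1 + e \<noteq> 0" using e by simp
        have "(1 - e/(1+e)) = 1/(1+e)" using ne by (simp add: field_simps)
        then have "((1 - e/(1+e)) *\<^sub>R u + (e/(1+e)) *\<^sub>R y) q = (z q + e * (z q - y q)) / (1+e) + e * y q / (1+e)"
          by (simp add: u_def)
        also have "\<dots> = ((1+e) * z q) / (1+e)" by (simp only: add_divide_distrib[symmetric]) (simp add: algebra_simps)
        also have "\<dots> = z q" using ne by simp
        finally show "z q = ((1 - e/(1+e)) *\<^sub>R u + (e/(1+e)) *\<^sub>R y) q" by simp
      qed
      moreover have "0 < e/(1+e)" "e/(1+e) < 1" using e by auto
      ultimately have "z \<in> open_segment u y" using uy by (auto simp: in_segment)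
      then show "y \<in> F" using F(1) uP yP z(1) unfolding face_of_def by blast
    qed
  qed
qed

end

context GT begin

definition AX :: "((nat \<times> nat) \<times> (nat \<times> nat)) set" where
  "AX = {((0, i), (0, i + 1)) | i. i \<le> n - 1} \<union> {((i, 0), (i + 1, 0)) | i. i \<le> n - 1}"

definition EF :: "(nat \<times> nat \<Rightarrow> real) set \<Rightarrow> ((nat \<times> nat) \<times> (nat \<times> nat)) set" where
  "EF F = AX \<union> edge ` str F"

lemma phi_eq: "phi n lam F = (ends (EF F), EF F)"
proof -
  have A: "{((i - 1, j), (i, j)) | i j. (i, j) \<in> GT_index n \<and>
                   (\<exists>x\<in>F. GT_ext n lam x (i, j) < GT_ext n lam x (i, j + 1))}
            \<union> {((i, j - 1), (i, j)) | i j. (i, j) \<in> GT_index n \<and>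
                   (\<exists>x\<in>F. GT_ext n lam x (i, j) > GT_ext n lam x (i + 1, j))} = edge ` str F"
    (is "?L = ?R")
  proof
    show "?R \<subseteq> ?L"
    proof
      fix e assume "e \<in> edge ` str F"
      then obtain c where c: "c \<in> str F" "e = edge c" by auto
      then show "e \<in> {((i - 1, j), (i, j)) | i j. (i, j) \<in> GT_index n \<and>
                   (\<exists>x\<in>F. GT_ext n lam x (i, j) < GT_ext n lam x (i, j + 1))}
            \<union> {((i, j - 1), (i, j)) | i j. (i, j) \<in> GT_index n \<and>
                   (\<exists>x\<in>F. GT_ext n lam x (i, j) > GT_ext n lam x (i + 1, j))}"
        by (cases c) (auto simp: str_def Cs_def v_def)
    qed
  next
    show "?L \<subseteq> ?R"
    proof
      fix e assume "e \<in> {((i - 1, j), (i, j)) | i j. (i, j) \<in> GT_index n \<and>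
                   (\<exists>x\<in>F. GT_ext n lam x (i, j) < GT_ext n lam x (i, j + 1))}
            \<union> {((i, j - 1), (i, j)) | i j. (i, j) \<in> GT_index n \<and>
                   (\<exists>x\<in>F. GT_ext n lam x (i, j) > GT_ext n lam x (i + 1, j))}"
      then show "e \<in> edge ` str F"
      proof
        assume "e \<in> {((i - 1, j), (i, j)) | i j. (i, j) \<in> GT_index n \<and>
                   (\<exists>x\<in>F. GT_ext n lam x (i, j) < GT_ext n lam x (i, j + 1))}"
        then obtain i j where "e = edge (CA i j)" "CA i j \<in> str F"
          by (auto simp: str_def Cs_def v_def)
        then show ?thesis by blast
      next
        assume "e \<in> {((i, j - 1), (i, j)) | i j. (i, j) \<in> GT_index n \<and>
                   (\<exists>x\<in>F. GT_ext n lam x (i, j) > GT_ext n lam x (i + 1, j))}"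
        then obtain i j where "e = edge (CB i j)" "CB i j \<in> str F"
          by (auto simp: str_def Cs_def v_def)
        then show ?thesis by blast
      qed
    qed
  qed
  show ?thesis unfolding phi_def Let_def EF_def AX_def ends_def
    by (simp only: A[symmetric] Un_assoc)
qed

lemma edge_inj: "c \<in> Cs \<Longrightarrow> d \<in> Cs \<Longrightarrow> edge c = edge d \<Longrightarrow> c = d"
  by (cases c; cases d) (auto simp: Cs_def I_iff)

lemma edge_notAX: "c \<in> Cs \<Longrightarrow> edge c \<notin> AX"
  by (cases c) (auto simp: Cs_def I_iff AX_def)

lemma EF_mono_iff:
  assumes "F' \<subseteq> P" "G \<subseteq> P"
  shows "EF F' \<subseteq> EF G \<longleftrightarrow> str F' \<subseteq> str G"
proof
  assume "str F' \<subseteq> str G" then show "EF F' \<subseteq> EF G" by (auto simp: EF_def)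
next
  assume a: "EF F' \<subseteq> EF G"
  show "str F' \<subseteq> str G"
  proof
    fix c assume c: "c \<in> str F'"
    then have cC: "c \<in> Cs" by (auto simp: str_def)
    have "edge c \<in> EF G" using a c by (auto simp: EF_def)
    then have "edge c \<in> edge ` str G" using edge_notAX[OF cC] by (auto simp: EF_def)
    then obtain d where d: "d \<in> str G" "edge c = edge d" by auto
    then have "c = d" using edge_inj cC str_sub by blast
    then show "c \<in> str G" using d by simp
  qed
qed

lemma ends_mono: "E \<subseteq> E' \<Longrightarrow> ends E \<subseteq> ends E'"
  by (auto simp: ends_def)

lemma FS_anti: "S \<subseteq> S' \<Longrightarrow> FS S \<subseteq> FS S'"
  by (auto simp: FS_def)

lemma order_iff:
  assumes F: "F' face_of P" "F' \<noteq> {}" and G: "G face_of P" "G \<noteq> {}"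
  shows "F' \<subseteq> G \<longleftrightarrow> subgraph_le (phi n lam F') (phi n lam G)"
proof -
  have FP: "F' \<subseteq> P" "G \<subseteq> P" using F G face_of_imp_subset by blast+
  have "subgraph_le (phi n lam F') (phi n lam G) \<longleftrightarrow> EF F' \<subseteq> EF G"
    by (auto simp: subgraph_le_def phi_eq dest: ends_mono)
  also have "\<dots> \<longleftrightarrow> str F' \<subseteq> str G" using EF_mono_iff FP by blast
  also have "\<dots> \<longleftrightarrow> F' \<subseteq> G"
  proof
    assume "str F' \<subseteq> str G"
    then have "FS (str F') \<subseteq> FS (str G)" by (rule FS_anti)
    then show "F' \<subseteq> G" using face_char[OF F] face_char[OF G] by simp
  next
    assume "F' \<subseteq> G" then show "str F' \<subseteq> str G" by (auto simp: str_def)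
  qed
  finally show ?thesis by simp
qed

end


definition qstep :: "nat \<times> nat \<Rightarrow> nat \<times> nat \<Rightarrow> bool" where
  "qstep u w \<longleftrightarrow> w = (fst u + 1, snd u) \<or> w = (fst u, snd u + 1)"

definition QE :: "((nat \<times> nat) \<times> (nat \<times> nat)) set \<Rightarrow> bool" where
  "QE E \<longleftrightarrow> (\<forall>(u,w)\<in>E. qstep u w)"

fun wk :: "('a \<times> 'a) set \<Rightarrow> 'a list \<Rightarrow> bool" where
  "wk E [] = False"
| "wk E [u] = True"
| "wk E (u # w # vs) = ((u, w) \<in> E \<and> wk E (w # vs))"

fun pe :: "'a list \<Rightarrow> ('a \<times> 'a) set" where
  "pe [] = {}"
| "pe [u] = {}"
| "pe (u # w # vs) = insert (u, w) (pe (w # vs))"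

definition le2 :: "nat \<times> nat \<Rightarrow> nat \<times> nat \<Rightarrow> bool" where
  "le2 u w \<longleftrightarrow> fst u \<le> fst w \<and> snd u \<le> snd w"

abbreviation sm :: "nat \<times> nat \<Rightarrow> nat" where "sm u \<equiv> fst u + snd u"

lemma wk_nth: "wk E vs \<longleftrightarrow> vs \<noteq> [] \<and> (\<forall>i. Suc i < length vs \<longrightarrow> (vs!i, vs!Suc i) \<in> E)"
proof (induction E vs rule: wk.induct)
  case (3 E u w vs)
  show ?case
  proof
    assume "wk E (u # w # vs)"
    then show "u # w # vs \<noteq> [] \<and> (\<forall>i. Suc i < length (u # w # vs) \<longrightarrow> ((u # w # vs) ! i, (u # w # vs) ! Suc i) \<in> E)"
      using 3 by (auto simp: nth_Cons split: nat.splits)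
  next
    assume a: "u # w # vs \<noteq> [] \<and> (\<forall>i. Suc i < length (u # w # vs) \<longrightarrow> ((u # w # vs) ! i, (u # w # vs) ! Suc i) \<in> E)"
    then have "(u,w) \<in> E" by force
    moreover have "\<forall>i. Suc i < length (w # vs) \<longrightarrow> ((w # vs) ! i, (w # vs) ! Suc i) \<in> E"
    proof (intro allI impI)
      fix i assume "Suc i < length (w # vs)"
      then show "((w # vs) ! i, (w # vs) ! Suc i) \<in> E" using a[THEN conjunct2, rule_format, of "Suc i"] by simp
    qed
    ultimately show "wk E (u # w # vs)" using 3 by simp
  qed
qed auto

lemma pe_nth: "pe vs = {(vs!i, vs!Suc i) | i. Suc i < length vs}"
proof (induction vs rule: pe.induct)
  case (3 u w vs)
  show ?case
  proof
    show "pe (u # w # vs) \<subseteq> {((u # w # vs) ! i, (u # w # vs) ! Suc i) |i. Suc i < length (u # w # vs)}"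
    proof
      fix e assume "e \<in> pe (u # w # vs)"
      then have "e = (u,w) \<or> e \<in> pe (w # vs)" by simp
      then show "e \<in> {((u # w # vs) ! i, (u # w # vs) ! Suc i) |i. Suc i < length (u # w # vs)}"
      proof
        assume "e = (u,w)" then show ?thesis by (auto intro!: exI[of _ 0])
      next
        assume "e \<in> pe (w # vs)"
        then obtain i where "e = ((w#vs)!i, (w#vs)!Suc i)" "Suc i < length (w#vs)" using 3 by auto
        then show ?thesis by (auto intro!: exI[of _ "Suc i"])
      qed
    qed
    show "{((u # w # vs) ! i, (u # w # vs) ! Suc i) |i. Suc i < length (u # w # vs)} \<subseteq> pe (u # w # vs)"
    proof
      fix e assume "e \<in> {((u # w # vs) ! i, (u # w # vs) ! Suc i) |i. Suc i < length (u # w # vs)}"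
      then obtain i where i: "e = ((u # w # vs) ! i, (u # w # vs) ! Suc i)" "Suc i < length (u # w # vs)" by auto
      show "e \<in> pe (u # w # vs)"
      proof (cases i)
        case 0 then show ?thesis using i by simp
      next
        case (Suc i')
        then have "e \<in> pe (w # vs)" using 3 i by auto
        then show ?thesis by simp
      qed
    qed
  qed
qed auto

lemma wk_pe_sub: "wk E vs \<Longrightarrow> pe vs \<subseteq> E"
  by (induction E vs rule: wk.induct) auto

lemma wk_mono: "wk E vs \<Longrightarrow> E \<subseteq> E' \<Longrightarrow> wk E' vs"
  by (induction E vs rule: wk.induct) auto

lemma wk_ne: "wk E vs \<Longrightarrow> vs \<noteq> []" by (cases vs) auto

lemma pe_set: "(u,w) \<in> pe vs \<Longrightarrow> u \<in> set vs \<and> w \<in> set vs"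
  by (induction vs rule: pe.induct) auto

lemma set_in_pe: "length vs \<ge> 2 \<Longrightarrow> x \<in> set vs \<Longrightarrow> (\<exists>y. (x,y) \<in> pe vs) \<or> (\<exists>y. (y,x) \<in> pe vs)"
proof (induction vs rule: pe.induct)
  case (3 u w vs)
  show ?case
  proof (cases "x = u")
    case True then show ?thesis by auto
  next
    case False
    then have "x \<in> set (w # vs)" using 3 by simp
    show ?thesis
    proof (cases vs)
      case Nil then show ?thesis using \<open>x \<in> set (w # vs)\<close> by auto
    next
      case (Cons a list)
      then have "length (w # vs) \<ge> 2" by simp
      then show ?thesis using 3 \<open>x \<in> set (w # vs)\<close> by auto
    qed
  qed
qed auto

lemma wk_Cons: "wk E (u # vs) \<longleftrightarrow> (vs = [] \<or> ((u, hd vs) \<in> E \<and> wk E vs))"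
  by (cases vs) auto

lemma pe_Cons: "vs \<noteq> [] \<Longrightarrow> pe (u # vs) = insert (u, hd vs) (pe vs)"
  by (cases vs) auto

lemma wk_append: "wk E xs \<Longrightarrow> wk E ys \<Longrightarrow> (last xs, hd ys) \<in> E \<Longrightarrow> wk E (xs @ ys)"
proof (induction E xs rule: wk.induct)
  case (2 E u) then show ?case by (cases ys) auto
next
  case (3 E u w vs) then show ?case by auto
qed auto

lemma pe_append: "xs \<noteq> [] \<Longrightarrow> ys \<noteq> [] \<Longrightarrow> pe (xs @ ys) = pe xs \<union> pe ys \<union> {(last xs, hd ys)}"
proof (induction xs rule: pe.induct)
  case (2 u) then show ?case by (cases ys) auto
next
  case (3 u w vs) then show ?case by auto
qed auto

lemma QE_step: assumes "QE E" "(u,w) \<in> E" shows "qstep u w"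
proof -
  from assms(1) have "\<forall>x\<in>E. case x of (u,w) \<Rightarrow> qstep u w" by (simp add: QE_def)
  then have "case (u,w) of (u,w) \<Rightarrow> qstep u w" using assms(2) by blast
  then show ?thesis by simp
qed

lemma qstep_le2: "qstep u w \<Longrightarrow> le2 u w" by (auto simp: qstep_def le2_def)
lemma qstep_sm: "qstep u w \<Longrightarrow> sm w = sm u + 1" by (auto simp: qstep_def)

lemma le2_trans: "le2 a b \<Longrightarrow> le2 b c \<Longrightarrow> le2 a c" by (auto simp: le2_def)
lemma le2_refl: "le2 a a" by (auto simp: le2_def)

lemma wk_le_hd: "wk E vs \<Longrightarrow> QE E \<Longrightarrow> w \<in> set vs \<Longrightarrow> le2 (hd vs) w"
proof (induction E vs rule: wk.induct)
  case (3 E u x vs)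
  have "(u,x) \<in> E" using 3(2) by simp
  then have ux: "le2 u x" using QE_step[OF 3(3)] qstep_le2 by blast
  show ?case
  proof (cases "w = u")
    case True then show ?thesis by (simp add: le2_refl)
  next
    case False then have "le2 x w" using 3 by auto
    then show ?thesis using ux le2_trans by auto
  qed
qed (auto simp: le2_refl)

lemma wk_le_last: "wk E vs \<Longrightarrow> QE E \<Longrightarrow> w \<in> set vs \<Longrightarrow> le2 w (last vs)"
proof (induction E vs arbitrary: w rule: wk.induct)
  case (3 E u x vs)
  have "(u,x) \<in> E" using 3(2) by simp
  then have ux: "le2 u x" using QE_step[OF 3(3)] qstep_le2 by blast
  have wk': "wk E (x#vs)" using 3(2) by simp
  have IH: "\<And>w. w \<in> set (x#vs) \<Longrightarrow> le2 w (last (x#vs))" using 3(1) wk' 3(3) by blast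
  have l: "last (u#x#vs) = last (x#vs)" by simp
  show ?case
  proof (cases "w = u")
    case True
    have "le2 x (last (x # vs))" using IH by simp
    then show ?thesis unfolding l using True ux le2_trans by blast
  next
    case False then have "w \<in> set (x#vs)" using 3(4) by simp
    then show ?thesis unfolding l using IH by blast
  qed
qed (auto simp: le2_refl)

lemma wk_sm_last: "wk E vs \<Longrightarrow> QE E \<Longrightarrow> sm (last vs) = sm (hd vs) + (length vs - 1)"
proof (induction E vs rule: wk.induct)
  case (3 E u x vs)
  have "(u,x) \<in> E" using 3(2) by simp
  then have "sm x = sm u + 1" using QE_step[OF 3(3)] qstep_sm by blast
  then show ?case using 3 by auto
qed auto

lemma wk_chain: "wk E vs \<Longrightarrow> QE E \<Longrightarrow> p \<in> set vs \<Longrightarrow> q \<in> set vs \<Longrightarrow> le2 p q \<or> le2 q p"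
proof (induction E vs rule: wk.induct)
  case (3 E u x vs)
  have "\<forall>w\<in>set (u # x # vs). le2 u w" using wk_le_hd[OF 3(2) 3(3)] by simp
  then show ?case using 3 by auto
qed (auto simp: le2_refl)

lemma le2_sm_eq: "le2 p q \<Longrightarrow> sm p = sm q \<Longrightarrow> p = q"
  by (cases p; cases q) (auto simp: le2_def)

lemma wk_sm_inj: "wk E vs \<Longrightarrow> QE E \<Longrightarrow> p \<in> set vs \<Longrightarrow> q \<in> set vs \<Longrightarrow> sm p = sm q \<Longrightarrow> p = q"
  using wk_chain le2_sm_eq by metis

lemma wk_down: "wk E vs \<Longrightarrow> QE E \<Longrightarrow> w \<in> set vs \<Longrightarrow> fst (hd vs) \<le> a \<Longrightarrow> a \<le> fst w \<Longrightarrow>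
   \<exists>c. c \<le> snd w \<and> (a, c) \<in> set vs"
proof (induction E vs arbitrary: w rule: wk.induct)
  case (2 E u) then show ?case by (cases u) auto
next
  case (3 E u x vs)
  have "(u,x) \<in> E" using 3(2) by simp
  then have q: "qstep u x" using QE_step[OF 3(3)] by blast
  show ?case
  proof (cases "w = u")
    case True then have "a = fst u" using 3 by simp
    then show ?thesis using True by (cases u) auto
  next
    case False
    then have w: "w \<in> set (x # vs)" using 3 by simp
    have uw: "le2 u w" using wk_le_hd[OF 3(2) 3(3)] 3(4) by simp
    show ?thesis
    proof (cases "fst x \<le> a")
      case True
      then obtain c where "c \<le> snd w" "(a,c) \<in> set (x # vs)" using 3(1)[OF _ 3(3) w] 3(2) 3(6) by auto
      then show ?thesis by auto
    next
      case False
      then have "a = fst u" using q 3(5) by (auto simp: qstep_def)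
      then show ?thesis using uw by (cases u) (auto simp: le2_def)
    qed
  qed
qed auto

lemma wk_pred: "wk E vs \<Longrightarrow> w \<in> set vs \<Longrightarrow> w \<noteq> hd vs \<Longrightarrow> \<exists>u. (u, w) \<in> pe vs"
proof (induction E vs rule: wk.induct)
  case (3 E u x vs)
  show ?case
  proof (cases "w = x")
    case True then show ?thesis by auto
  next
    case False then show ?thesis using 3 by auto
  qed
qed auto

lemma wk_succ: "wk E vs \<Longrightarrow> w \<in> set vs \<Longrightarrow> w \<noteq> last vs \<Longrightarrow> \<exists>u. (w, u) \<in> pe vs"
proof (induction E vs rule: wk.induct)
  case (3 E u x vs)
  show ?case
  proof (cases "w = u")
    case True then show ?thesis by auto
  next
    case False then show ?thesis using 3 by auto
  qed
qed auto

lemma wk_sm_exists: "wk E vs \<Longrightarrow> QE E \<Longrightarrow> sm (hd vs) \<le> m \<Longrightarrow> m \<le> sm (last vs) \<Longrightarrow> \<exists>w\<in>set vs. sm w = m"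
proof (induction E vs rule: wk.induct)
  case (3 E u x vs)
  have "(u,x) \<in> E" using 3(2) by simp
  then have "sm x = sm u + 1" using QE_step[OF 3(3)] qstep_sm by blast
  then show ?case using 3 by (cases "m = sm u") auto
qed auto

lemma pe_qstep: "wk E vs \<Longrightarrow> QE E \<Longrightarrow> (u,w) \<in> pe vs \<Longrightarrow> qstep u w"
  using wk_pe_sub QE_step by blast


context GT begin

lemma psum_0: "psum k 0 = 0" by (simp add: psum_def)
lemma psum_len: "psum k (length k) = n" by (simp add: psum_def n_def)
lemma psum_Suc: "l < length k \<Longrightarrow> psum k (Suc l) = psum k l + k ! l"
  by (simp add: psum_def take_Suc_conv_app_nth)
lemma psum_strict: "l < l' \<Longrightarrow> l' \<le> length k \<Longrightarrow> psum k l < psum k l'"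
proof (induction l')
  case 0 then show ?case by simp
next
  case (Suc l')
  have pos: "k ! l' > 0" using kpos Suc by auto
  have "psum k (Suc l') = psum k l' + k ! l'" using Suc by (simp add: psum_Suc)
  then show ?case using Suc pos by (cases "l = l'") auto
qed
lemma psum_mono: "l \<le> l' \<Longrightarrow> l' \<le> length k \<Longrightarrow> psum k l \<le> psum k l'"
  using psum_strict by (cases "l = l'") (auto intro: less_imp_le)
lemma psum_le_n: "l \<le> length k \<Longrightarrow> psum k l \<le> n"
  using psum_mono[of l "length k"] psum_len by simp

lemma n_pos: "1 \<le> n"
proof -
  obtain a r where "k = a # r" using kne by (cases k) auto
  then have "a > 0" using kpos by simp
  then show ?thesis using \<open>k = a # r\<close> n_def by simp
qed

definition PSet :: "nat set" where "PSet = {psum k l | l. l \<le> length k}"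

lemma term_iff: "(a, b) \<in> terminals k \<longleftrightarrow> a \<in> PSet \<and> b = n - a"
  by (auto simp: terminals_def PSet_def n_def)

lemma PSet_le: "a \<in> PSet \<Longrightarrow> a \<le> n" using psum_le_n by (auto simp: PSet_def)
lemma zero_PSet: "0 \<in> PSet" using psum_0 by (force simp: PSet_def)
lemma n_PSet: "n \<in> PSet" using psum_len by (force simp: PSet_def)

lemma blk_eq:
  assumes a: "1 \<le> a" "a < n" "a \<notin> PSet"
  shows "lam a = lam (a + 1)"
proof -
  define l where "l = (LEAST l. a < psum k l)"
  have ex: "a < psum k (length k)" using a psum_len by simp
  then have al: "a < psum k l" unfolding l_def by (rule LeastI)
  have lle: "l \<le> length k" unfolding l_def using ex by (rule Least_le)
  have l0: "l \<noteq> 0"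
  proof
    assume "l = 0" then show False using al psum_0 by simp
  qed
  have "\<not> a < psum k (l - 1)" using l0 unfolding l_def
    by (metis diff_less l_def not_less_Least zero_less_one neq0_conv)
  then have "psum k (l - 1) \<le> a" by simp
  moreover have "psum k (l - 1) \<noteq> a" using a(3) lle by (auto simp: PSet_def)
  ultimately have "psum k (l - 1) < a" by simp
  moreover have "l \<in> {1..length k}" using l0 lle by simp
  ultimately show ?thesis using blk al by force
qed

lemma stp_lt:
  assumes "a \<in> PSet" "0 < a" "a < n"
  shows "lam (a + 1) < lam a"
proof -
  obtain l where l: "l \<le> length k" "a = psum k l" using assms by (auto simp: PSet_def)
  have "l \<noteq> 0"
  proof
    assume "l = 0" then show False using l assms psum_0 by simp
  qed
  moreover have "l \<noteq> length k" using l assms psum_len by auto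
  ultimately show ?thesis using stp l by auto
qed

lemma lam_mono: "1 \<le> a \<Longrightarrow> a < n \<Longrightarrow> lam (a + 1) \<le> lam a"
  using blk_eq stp_lt by (cases "a \<in> PSet") (auto intro: less_imp_le)

lemma v_bd: "i + j = n + 1 \<Longrightarrow> v x (i, j) = lam i" by (simp add: v_def GT_ext_def)
lemma v_int: "(i, j) \<in> I \<Longrightarrow> v x (i, j) = x (i, j)" by (simp add: v_def GT_ext_def I_iff)

lemma PA: "x \<in> P \<Longrightarrow> (i, j) \<in> I \<Longrightarrow> v x (i, j) \<le> v x (i, j + 1)"
proof -
  assume "x \<in> P" "(i, j) \<in> I"
  then have "CA i j \<in> Cs" by (simp add: Cs_def)
  then show ?thesis using \<open>x \<in> P\<close> by (auto simp: P_iff)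
qed
lemma PB: "x \<in> P \<Longrightarrow> (i, j) \<in> I \<Longrightarrow> v x (i + 1, j) \<le> v x (i, j)"
proof -
  assume "x \<in> P" "(i, j) \<in> I"
  then have "CB i j \<in> Cs" by (simp add: Cs_def)
  then show ?thesis using \<open>x \<in> P\<close> by (auto simp: P_iff)
qed

lemma EF_iff: "(u, w) \<in> EF F \<longleftrightarrow> (u, w) \<in> AX \<or>
   (\<exists>i j. (i, j) \<in> I \<and> u = (i - 1, j) \<and> w = (i, j) \<and> (\<exists>x\<in>F. v x (i, j) < v x (i, j + 1))) \<or>
   (\<exists>i j. (i, j) \<in> I \<and> u = (i, j - 1) \<and> w = (i, j) \<and> (\<exists>x\<in>F. v x (i + 1, j) < v x (i, j)))"
proof
  assume "(u, w) \<in> EF F"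
  then have "(u, w) \<in> AX \<or> (\<exists>c\<in>str F. (u, w) = edge c)" by (auto simp: EF_def)
  then show "(u, w) \<in> AX \<or>
   (\<exists>i j. (i, j) \<in> I \<and> u = (i - 1, j) \<and> w = (i, j) \<and> (\<exists>x\<in>F. v x (i, j) < v x (i, j + 1))) \<or>
   (\<exists>i j. (i, j) \<in> I \<and> u = (i, j - 1) \<and> w = (i, j) \<and> (\<exists>x\<in>F. v x (i + 1, j) < v x (i, j)))"
  proof
    assume "\<exists>c\<in>str F. (u, w) = edge c"
    then obtain c where c: "c \<in> str F" "(u, w) = edge c" by blast
    then show ?thesis by (cases c) (auto simp: str_def Cs_def)
  qed simp
next
  assume a: "(u, w) \<in> AX \<or>
   (\<exists>i j. (i, j) \<in> I \<and> u = (i - 1, j) \<and> w = (i, j) \<and> (\<exists>x\<in>F. v x (i, j) < v x (i, j + 1))) \<or>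
   (\<exists>i j. (i, j) \<in> I \<and> u = (i, j - 1) \<and> w = (i, j) \<and> (\<exists>x\<in>F. v x (i + 1, j) < v x (i, j)))"
  show "(u, w) \<in> EF F"
  proof (cases "(u, w) \<in> AX")
    case True then show ?thesis by (simp add: EF_def)
  next
    case False
    then have "(\<exists>i j. (i, j) \<in> I \<and> u = (i - 1, j) \<and> w = (i, j) \<and> (\<exists>x\<in>F. v x (i, j) < v x (i, j + 1))) \<or>
      (\<exists>i j. (i, j) \<in> I \<and> u = (i, j - 1) \<and> w = (i, j) \<and> (\<exists>x\<in>F. v x (i + 1, j) < v x (i, j)))" using a by simp
    then show ?thesis
    proof
      assume "\<exists>i j. (i, j) \<in> I \<and> u = (i - 1, j) \<and> w = (i, j) \<and> (\<exists>x\<in>F. v x (i, j) < v x (i, j + 1))"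
      then obtain i j where "(i, j) \<in> I" "u = (i - 1, j)" "w = (i, j)" "\<exists>x\<in>F. v x (i, j) < v x (i, j + 1)" by blast
      then have "CA i j \<in> str F" "(u, w) = edge (CA i j)" by (auto simp: str_def Cs_def)
      then show ?thesis unfolding EF_def by blast
    next
      assume "\<exists>i j. (i, j) \<in> I \<and> u = (i, j - 1) \<and> w = (i, j) \<and> (\<exists>x\<in>F. v x (i + 1, j) < v x (i, j))"
      then obtain i j where "(i, j) \<in> I" "u = (i, j - 1)" "w = (i, j)" "\<exists>x\<in>F. v x (i + 1, j) < v x (i, j)" by blast
      then have "CB i j \<in> str F" "(u, w) = edge (CB i j)" by (auto simp: str_def Cs_def)
      then show ?thesis unfolding EF_def by blast
    qed
  qed
qed

lemma EF_QE: "QE (EF F)"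
  unfolding QE_def
proof (clarify)
  fix a b c d assume "((a, b), (c, d)) \<in> EF F"
  then show "qstep (a, b) (c, d)" unfolding EF_iff by (auto simp: AX_def qstep_def I_iff)
qed

lemma EF_sm: "(u, w) \<in> EF F \<Longrightarrow> sm w \<le> n \<and> sm u < sm w"
  unfolding EF_iff using n_pos by (auto simp: AX_def I_iff)

lemma ends_sm: "u \<in> ends (EF F) \<Longrightarrow> sm u \<le> n"
  unfolding ends_def using EF_sm by fastforce

lemma L_in:
  assumes FP: "F \<subseteq> P" and u: "u \<in> ends (EF F)" "u \<noteq> (0, 0)"
  shows "\<exists>w. (w, u) \<in> EF F"
proof -
  obtain a b where ab: "u = (a, b)" by (cases u)
  have sm: "a + b \<le> n" using ends_sm[OF u(1)] ab by simp
  show ?thesis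
  proof (cases "a = 0")
    case True
    then have "((0, b - 1), (0, b)) \<in> AX" using u ab sm by (auto simp: AX_def intro!: exI[of _ "b - 1"])
    then show ?thesis using ab True by (auto simp: EF_def)
  next
    case a0: False
    show ?thesis
    proof (cases "b = 0")
      case True
      then have "((a - 1, 0), (a, 0)) \<in> AX" using a0 ab sm by (auto simp: AX_def intro!: exI[of _ "a - 1"])
      then show ?thesis using ab True by (auto simp: EF_def)
    next
      case b0: False
      show ?thesis
      proof (cases "\<exists>w. (w, u) \<in> EF F")
        case True then show ?thesis .
      next
        case False
        then obtain w where w: "(u, w) \<in> EF F" using u(1) by (auto simp: ends_def)
        have key: "(a, b) \<in> I \<and> (\<exists>x\<in>F. v x (a + 1, b) < v x (a, b + 1))"
        proof -
          from w have "(u, w) \<in> AX \<or>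
            (\<exists>i j. (i, j) \<in> I \<and> u = (i - 1, j) \<and> w = (i, j) \<and> (\<exists>x\<in>F. v x (i, j) < v x (i, j + 1))) \<or>
            (\<exists>i j. (i, j) \<in> I \<and> u = (i, j - 1) \<and> w = (i, j) \<and> (\<exists>x\<in>F. v x (i + 1, j) < v x (i, j)))"
            by (simp only: EF_iff)
          moreover have "(u, w) \<notin> AX" using a0 b0 ab by (auto simp: AX_def)
          ultimately consider
            (A) i j x where "(i, j) \<in> I" "u = (i - 1, j)" "w = (i, j)" "x \<in> F" "v x (i, j) < v x (i, j + 1)"
          | (B) i j x where "(i, j) \<in> I" "u = (i, j - 1)" "w = (i, j)" "x \<in> F" "v x (i + 1, j) < v x (i, j)"
            by blast
          then show ?thesis
          proof cases
            case A
            then have ij: "i = a + 1" "j = b" using ab a0 by auto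
            then have I1: "(a, b + 1) \<in> I" "(a, b) \<in> I" using A(1) a0 b0 by (auto simp: I_iff)
            have "v x (a + 1, b + 1) \<le> v x (a, b + 1)" using PB[OF _ I1(1)] A FP by auto
            then show ?thesis using A ij I1 by force
          next
            case B
            then have ij: "i = a" "j = b + 1" using ab b0 by auto
            then have I1: "(a + 1, b) \<in> I" "(a, b) \<in> I" using B(1) a0 b0 by (auto simp: I_iff)
            have "v x (a + 1, b) \<le> v x (a + 1, b + 1)" using PA[OF _ I1(1)] B FP by auto
            then show ?thesis using B ij I1 by force
          qed
        qed
        then obtain x where x: "x \<in> F" "v x (a + 1, b) < v x (a, b + 1)" by blast
        have xP: "x \<in> P" using x FP by auto
        have "v x (a, b) < v x (a, b + 1) \<or> v x (a + 1, b) < v x (a, b)" using x by linarith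
        then show ?thesis
        proof
          assume "v x (a, b) < v x (a, b + 1)"
          then have "((a - 1, b), (a, b)) \<in> EF F" unfolding EF_iff using key x by blast
          then show ?thesis using ab by blast
        next
          assume "v x (a + 1, b) < v x (a, b)"
          then have "((a, b - 1), (a, b)) \<in> EF F" unfolding EF_iff using key x by blast
          then show ?thesis using ab by blast
        qed
      qed
    qed
  qed
qed

lemma L_out:
  assumes FP: "F \<subseteq> P" and u: "u \<in> ends (EF F)" "u \<notin> terminals k"
  shows "\<exists>w. (u, w) \<in> EF F"
proof -
  obtain a b where ab: "u = (a, b)" by (cases u)
  have sm: "a + b \<le> n" using ends_sm[OF u(1)] ab by simp
  show ?thesis
  proof (cases "a = 0")
    case True
    then have "b \<noteq> n" using u ab zero_PSet by (auto simp: term_iff)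
    then have "((0, b), (0, b + 1)) \<in> AX" using sm True by (auto simp: AX_def)
    then show ?thesis using ab True by (auto simp: EF_def)
  next
    case a0: False
    show ?thesis
    proof (cases "b = 0")
      case True
      then have "a \<noteq> n" using u ab n_PSet by (auto simp: term_iff)
      then have "((a, 0), (a + 1, 0)) \<in> AX" using sm True by (auto simp: AX_def)
      then show ?thesis using ab True by (auto simp: EF_def)
    next
      case b0: False
      show ?thesis
      proof (cases "\<exists>w. (u, w) \<in> EF F")
        case True then show ?thesis .
      next
        case False
        then obtain w where w: "(w, u) \<in> EF F" using u(1) by (auto simp: ends_def)
        have abI: "(a, b) \<in> I" using a0 b0 sm by (simp add: I_iff)
        have key: "\<exists>x\<in>F. v x (a + 1, b) < v x (a, b + 1)"
        proof -
          from w have "(w, u) \<in> AX \<or>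
            (\<exists>i j. (i, j) \<in> I \<and> w = (i - 1, j) \<and> u = (i, j) \<and> (\<exists>x\<in>F. v x (i, j) < v x (i, j + 1))) \<or>
            (\<exists>i j. (i, j) \<in> I \<and> w = (i, j - 1) \<and> u = (i, j) \<and> (\<exists>x\<in>F. v x (i + 1, j) < v x (i, j)))"
            by (simp only: EF_iff)
          moreover have "(w, u) \<notin> AX" using a0 b0 ab by (auto simp: AX_def)
          ultimately consider
            (A) x where "x \<in> F" "v x (a, b) < v x (a, b + 1)"
          | (B) x where "x \<in> F" "v x (a + 1, b) < v x (a, b)"
            using ab by blast
          then show ?thesis
          proof cases
            case A
            then have "v x (a + 1, b) \<le> v x (a, b)" using PB[OF _ abI] FP by auto
            then show ?thesis using A by force
          next
            case B
            then have "v x (a, b) \<le> v x (a, b + 1)" using PA[OF _ abI] FP by auto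
            then show ?thesis using B by force
          qed
        qed
        then obtain x where x: "x \<in> F" "v x (a + 1, b) < v x (a, b + 1)" by blast
        have xP: "x \<in> P" using x FP by auto
        show ?thesis
        proof (cases "a + b < n")
          case True
          then have I1: "(a + 1, b) \<in> I" "(a, b + 1) \<in> I" using a0 b0 by (auto simp: I_iff)
          have "v x (a + 1, b) < v x (a + 1, b + 1) \<or> v x (a + 1, b + 1) < v x (a, b + 1)" using x by linarith
          then show ?thesis
          proof
            assume "v x (a + 1, b) < v x (a + 1, b + 1)"
            then have "((a, b), (a + 1, b)) \<in> EF F" unfolding EF_iff using I1 x
              by (intro disjI2 disjI1 exI[of _ "a+1"] exI[of _ b]) auto
            then show ?thesis using ab by blast
          next
            assume "v x (a + 1, b + 1) < v x (a, b + 1)"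
            then have "((a, b), (a, b + 1)) \<in> EF F" unfolding EF_iff using I1 x
              by (intro disjI2 disjI2 exI[of _ "a"] exI[of _ "b+1"]) auto
            then show ?thesis using ab by blast
          qed
        next
          case False
          then have e: "a + b = n" using sm by simp
          have "v x (a + 1, b) = lam (a + 1)" "v x (a, b + 1) = lam a" using e by (auto simp: v_bd)
          then have "lam (a + 1) < lam a" using x by simp
          have "a \<in> PSet"
          proof (rule ccontr)
            assume "a \<notin> PSet"
            then have "lam a = lam (a + 1)" using blk_eq[of a] a0 b0 e by simp
            then show False using \<open>lam (a + 1) < lam a\<close> by simp
          qed
          then have "u \<in> terminals k" using ab e by (auto simp: term_iff)
          then show ?thesis using u by simp
        qed
      qed
    qed
  qed
qed

lemma L_term:
  assumes FP: "F \<subseteq> P" and Fne: "F \<noteq> {}"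
  shows "terminals k \<subseteq> ends (EF F)"
proof
  fix t assume t: "t \<in> terminals k"
  then obtain a where a: "t = (a, n - a)" "a \<in> PSet" by (cases t) (auto simp: term_iff)
  have an: "a \<le> n" using PSet_le a by simp
  show "t \<in> ends (EF F)"
  proof (cases "a = 0")
    case True
    then have "((0, n - 1), (0, n)) \<in> AX" using n_pos by (auto simp: AX_def intro!: exI[of _ "n - 1"])
    then show ?thesis using a True by (auto simp: EF_def ends_def)
  next
    case a0: False
    show ?thesis
    proof (cases "a = n")
      case True
      then have "((n - 1, 0), (n, 0)) \<in> AX" using n_pos by (auto simp: AX_def intro!: exI[of _ "n - 1"])
      then show ?thesis using a True by (auto simp: EF_def ends_def)
    next
      case False
      then have an': "a < n" using an by simp
      obtain x where x: "x \<in> F" using Fne by blast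
      have I1: "(a, n - a) \<in> I" using a0 an' by (auto simp: I_iff)
      have l: "lam (a + 1) < lam a" using stp_lt a a0 an' by simp
      have "v x (a + 1, n - a) = lam (a + 1)" "v x (a, n - a + 1) = lam a" using an' by (auto simp: v_bd)
      then have "v x (a, n - a) < v x (a, n - a + 1) \<or> v x (a + 1, n - a) < v x (a, n - a)" using l by linarith
      then have "(\<exists>w. (w, (a, n - a)) \<in> EF F)"
      proof
        assume "v x (a, n - a) < v x (a, n - a + 1)"
        then have "((a - 1, n - a), (a, n - a)) \<in> EF F" unfolding EF_iff using I1 x by blast
        then show ?thesis by blast
      next
        assume "v x (a + 1, n - a) < v x (a, n - a)"
        then have "((a, n - a - 1), (a, n - a)) \<in> EF F" unfolding EF_iff using I1 x by blast
        then show ?thesis by blast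
      qed
      then show ?thesis using a by (auto simp: ends_def)
    qed
  qed
qed

end

context GT begin

lemma root_walk:
  assumes FP: "F \<subseteq> P"
  shows "u \<in> ends (EF F) \<Longrightarrow> \<exists>vs. wk (EF F) vs \<and> hd vs = (0, 0) \<and> last vs = u"
proof (induction "sm u" arbitrary: u)
  case 0
  then have "u = (0, 0)" by (cases u) auto
  then show ?case by (intro exI[of _ "[u]"]) auto
next
  case (Suc m)
  then have "u \<noteq> (0, 0)" by auto
  then obtain w where w: "(w, u) \<in> EF F" using L_in[OF FP Suc(3)] by blast
  have "sm u = sm w + 1" using qstep_sm QE_step[OF EF_QE w] by blast
  then have smw: "m = sm w" using Suc(2) by simp
  have "w \<in> ends (EF F)" unfolding ends_def using w by blast
  then obtain vs where vs: "wk (EF F) vs" "hd vs = (0, 0)" "last vs = w" using Suc(1)[OF smw] by blast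
  have "wk (EF F) (vs @ [u])" using wk_append[OF vs(1), of "[u]"] vs w by simp
  moreover have "hd (vs @ [u]) = (0, 0)" using vs wk_ne by fastforce
  ultimately show ?case by (intro exI[of _ "vs @ [u]"]) auto
qed

lemma term_walk:
  assumes FP: "F \<subseteq> P"
  shows "u \<in> ends (EF F) \<Longrightarrow> \<exists>vs. wk (EF F) vs \<and> hd vs = u \<and> last vs \<in> terminals k"
proof (induction "n - sm u" arbitrary: u rule: less_induct)
  case less
  show ?case
  proof (cases "u \<in> terminals k")
    case True then show ?thesis by (intro exI[of _ "[u]"]) auto
  next
    case False
    then obtain w where w: "(u, w) \<in> EF F" using L_out[OF FP less(2)] by blast
    have "sm w = sm u + 1" using qstep_sm QE_step[OF EF_QE w] by blast
    moreover have "sm w \<le> n" using EF_sm[OF w] by simp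
    ultimately have lt: "n - sm w < n - sm u" by simp
    have "w \<in> ends (EF F)" unfolding ends_def using w by blast
    then obtain vs where vs: "wk (EF F) vs" "hd vs = w" "last vs \<in> terminals k" using less(1)[OF lt] by blast
    have ne: "vs \<noteq> []" using vs wk_ne by blast
    have "wk (EF F) (u # vs)" using vs w ne by (simp add: wk_Cons)
    moreover have "last (u # vs) = last vs" using ne by simp
    ultimately show ?thesis using vs by (intro exI[of _ "u # vs"]) auto
  qed
qed

lemma QE_Gamma: "QE (Gamma_edges k)"
  unfolding QE_def
proof (clarify)
  fix a b c d assume "((a,b),(c,d)) \<in> Gamma_edges k"
  then have "((a,b),(c,d)) \<in> Qplus_edges" by (simp add: Gamma_edges_def)
  then show "qstep (a,b) (c,d)" by (auto simp: Qplus_edges_def qstep_def)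
qed

lemma Gamma_path_wk: "Gamma_path k ws \<Longrightarrow> wk (Gamma_edges k) ws"
  unfolding Gamma_path_def wk_nth by blast

lemma term_sm: "t \<in> terminals k \<Longrightarrow> sm t = n"
  using PSet_le by (cases t) (auto simp: term_iff)

lemma pos_path:
  assumes QE: "QE E" and vs: "wk E vs" "hd vs = (0, 0)" "last vs \<in> terminals k"
  shows "positive_path k vs"
proof -
  have ne: "vs \<noteq> []" using vs wk_ne by blast
  have GV: "set vs \<subseteq> Gamma_vertices k"
  proof
    fix w assume "w \<in> set vs"
    then have "le2 w (last vs)" using wk_le_last[OF vs(1) QE] by blast
    then show "w \<in> Gamma_vertices k" using vs(3) unfolding Gamma_vertices_def le2_def
      by (cases w) (auto intro!: bexI[of _ "last vs"])
  qed
  have GP: "Gamma_path k vs"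
    unfolding Gamma_path_def
  proof (intro conjI allI impI)
    show "vs \<noteq> []" by (rule ne)
    show "set vs \<subseteq> Gamma_vertices k" by (rule GV)
    fix i assume i: "Suc i < length vs"
    then have e: "(vs ! i, vs ! Suc i) \<in> E" using vs(1) by (simp add: wk_nth)
    then have "qstep (vs ! i) (vs ! Suc i)" using QE_step[OF QE] by blast
    then have "(vs ! i, vs ! Suc i) \<in> Qplus_edges" unfolding qstep_def Qplus_edges_def
      by (cases "vs ! i") auto
    moreover have "vs ! i \<in> set vs" "vs ! Suc i \<in> set vs" using i by auto
    then have "vs ! i \<in> Gamma_vertices k" "vs ! Suc i \<in> Gamma_vertices k" using GV by blast+
    ultimately show "(vs ! i, vs ! Suc i) \<in> Gamma_edges k" by (simp add: Gamma_edges_def)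
  qed
  have lenv: "sm (last vs) = length vs - 1" using wk_sm_last[OF vs(1) QE] vs(2) by simp
  show ?thesis unfolding positive_path_def
  proof (intro conjI allI impI GP vs(2,3))
    fix ws assume ws: "Gamma_path k ws \<and> hd ws = (0, 0) \<and> last ws = last vs"
    then have "wk (Gamma_edges k) ws" using Gamma_path_wk by blast
    then have "sm (last ws) = length ws - 1" using wk_sm_last[OF _ QE_Gamma] ws by fastforce
    moreover have "ws \<noteq> []" using ws by (simp add: Gamma_path_def)
    ultimately show "length vs \<le> length ws" using lenv ws ne by (cases ws; cases vs) auto
  qed
qed

lemma pos_path_props:
  assumes "positive_path k vs"
  shows "wk (Gamma_edges k) vs" "hd vs = (0, 0)" "last vs \<in> terminals k" "length vs = n + 1"
proof -
  show wk: "wk (Gamma_edges k) vs" using assms Gamma_path_wk by (simp add: positive_path_def)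
  show h: "hd vs = (0, 0)" "last vs \<in> terminals k" using assms by (simp_all add: positive_path_def)
  have "sm (last vs) = sm (hd vs) + (length vs - 1)" using wk_sm_last[OF wk QE_Gamma] .
  moreover have "vs \<noteq> []" using wk wk_ne by blast
  ultimately show "length vs = n + 1" using h term_sm by (cases vs) auto
qed

lemma path_graph_eq: "path_graph vs = (set vs, pe vs)"
  by (simp add: path_graph_def pe_nth)

lemma edge_on_path:
  assumes FP: "F \<subseteq> P" and e: "(u, w) \<in> EF F"
  shows "\<exists>vs. positive_path k vs \<and> pe vs \<subseteq> EF F \<and> (u, w) \<in> pe vs"
proof -
  have ue: "u \<in> ends (EF F)" unfolding ends_def using e by blast
  have we: "w \<in> ends (EF F)" unfolding ends_def using e by blast
  obtain xs where xs: "wk (EF F) xs" "hd xs = (0, 0)" "last xs = u"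
    using root_walk[OF FP ue] by blast
  obtain ys where ys: "wk (EF F) ys" "hd ys = w" "last ys \<in> terminals k"
    using term_walk[OF FP we] by blast
  have ne: "xs \<noteq> []" "ys \<noteq> []" using xs(1) ys(1) wk_ne by blast+
  have e': "(last xs, hd ys) \<in> EF F" using xs(3) ys(2) e by simp
  have wk: "wk (EF F) (xs @ ys)" using wk_append[OF xs(1) ys(1) e'] .
  have h: "hd (xs @ ys) = (0, 0)" using ne(1) xs(2) by simp
  have l: "last (xs @ ys) \<in> terminals k" using ne(2) ys(3) by simp
  have "positive_path k (xs @ ys)" using pos_path[OF EF_QE wk h l] .
  moreover have "pe (xs @ ys) \<subseteq> EF F" using wk wk_pe_sub by blast
  moreover have "(u, w) \<in> pe (xs @ ys)" using pe_append[OF ne] xs(3) ys(2) by simp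
  ultimately show ?thesis by blast
qed

lemma phi_in_Gamma:
  assumes F: "F face_of P" "F \<noteq> {}"
  shows "phi n lam F \<in> Gamma_faces k"
proof -
  have FP: "F \<subseteq> P" using F face_of_imp_subset by blast
  define Ps where "Ps = {vs. positive_path k vs \<and> pe vs \<subseteq> EF F}"
  have len: "\<And>vs. vs \<in> Ps \<Longrightarrow> length vs \<ge> 2"
  proof -
    fix vs assume "vs \<in> Ps"
    then have "length vs = n + 1" using pos_path_props(4) by (simp add: Ps_def)
    then show "length vs \<ge> 2" using n_pos by simp
  qed
  have onp: "\<And>u w. (u, w) \<in> EF F \<Longrightarrow> \<exists>vs\<in>Ps. (u, w) \<in> pe vs"
  proof -
    fix u w assume "(u, w) \<in> EF F"
    then obtain vs where "positive_path k vs" "pe vs \<subseteq> EF F" "(u, w) \<in> pe vs"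
      using edge_on_path[OF FP] by blast
    then show "\<exists>vs\<in>Ps. (u, w) \<in> pe vs" unfolding Ps_def by blast
  qed
  have V: "ends (EF F) = (\<Union>vs\<in>Ps. fst (path_graph vs))"
  proof
    show "ends (EF F) \<subseteq> (\<Union>vs\<in>Ps. fst (path_graph vs))"
    proof
      fix x assume "x \<in> ends (EF F)"
      then obtain y where "(x, y) \<in> EF F \<or> (y, x) \<in> EF F" unfolding ends_def by blast
      then have "\<exists>vs\<in>Ps. (x, y) \<in> pe vs \<or> (y, x) \<in> pe vs"
      proof
        assume "(x, y) \<in> EF F" then show ?thesis using onp[of x y] by blast
      next
        assume "(y, x) \<in> EF F" then show ?thesis using onp[of y x] by blast
      qed
      then obtain vs where vs: "vs \<in> Ps" "(x, y) \<in> pe vs \<or> (y, x) \<in> pe vs" by blast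
      from vs(2) have "x \<in> set vs"
      proof
        assume "(x, y) \<in> pe vs" then show ?thesis using pe_set[of x y vs] by simp
      next
        assume "(y, x) \<in> pe vs" then show ?thesis using pe_set[of y x vs] by simp
      qed
      then show "x \<in> (\<Union>vs\<in>Ps. fst (path_graph vs))" using vs(1) unfolding path_graph_eq fst_conv by blast
    qed
    show "(\<Union>vs\<in>Ps. fst (path_graph vs)) \<subseteq> ends (EF F)"
    proof
      fix x assume "x \<in> (\<Union>vs\<in>Ps. fst (path_graph vs))"
      then obtain vs where vs: "vs \<in> Ps" "x \<in> set vs" unfolding path_graph_eq fst_conv by blast
      have "(\<exists>y. (x,y) \<in> pe vs) \<or> (\<exists>y. (y,x) \<in> pe vs)" using set_in_pe[OF len[OF vs(1)] vs(2)] .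
      moreover have "pe vs \<subseteq> EF F" using vs(1) unfolding Ps_def by blast
      ultimately show "x \<in> ends (EF F)" unfolding ends_def by blast
    qed
  qed
  have E: "EF F = (\<Union>vs\<in>Ps. snd (path_graph vs))"
  proof
    show "EF F \<subseteq> (\<Union>vs\<in>Ps. snd (path_graph vs))"
    proof
      fix e assume "e \<in> EF F"
      then obtain vs where "vs \<in> Ps" "e \<in> pe vs" using onp by (cases e) blast
      then show "e \<in> (\<Union>vs\<in>Ps. snd (path_graph vs))" unfolding path_graph_eq by auto
    qed
    show "(\<Union>vs\<in>Ps. snd (path_graph vs)) \<subseteq> EF F" unfolding path_graph_eq Ps_def by auto
  qed
  have PP: "\<forall>vs\<in>Ps. positive_path k vs" by (simp add: Ps_def)
  have T: "terminals k \<subseteq> fst (phi n lam F)" using L_term[OF FP F(2)] by (simp add: phi_eq)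
  have V': "fst (phi n lam F) = (\<Union>vs\<in>Ps. fst (path_graph vs))" using V by (simp add: phi_eq)
  have E': "snd (phi n lam F) = (\<Union>vs\<in>Ps. snd (path_graph vs))" using E by (simp add: phi_eq)
  show ?thesis unfolding Gamma_faces_def mem_Collect_eq
    using T PP V' E' by blast
qed

end

context GT begin

definition gg :: "(nat \<times> nat) list \<Rightarrow> nat \<times> nat \<Rightarrow> real" where
  "gg vs c = (if \<exists>b < snd c. (fst c, b) \<in> set vs then 1 else 0)"

lemma gg_01: "gg vs c = 0 \<or> gg vs c = 1" by (simp add: gg_def)

lemma gg_A_mono: "gg vs (i, j) \<le> gg vs (i, j + 1)"
  by (auto simp: gg_def less_Suc_eq)

lemma pp_wk: "positive_path k vs \<Longrightarrow> wk (Gamma_edges k) vs" using pos_path_props by blast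
lemma pp_hd: "positive_path k vs \<Longrightarrow> hd vs = (0, 0)" using pos_path_props by blast
lemma pp_last: "positive_path k vs \<Longrightarrow> last vs \<in> terminals k" using pos_path_props by blast
lemma pp_len: "positive_path k vs \<Longrightarrow> length vs = n + 1" using pos_path_props by blast

lemma pp_le_last: "positive_path k vs \<Longrightarrow> w \<in> set vs \<Longrightarrow> le2 w (last vs)"
  using wk_le_last[OF pp_wk QE_Gamma] by blast

lemma pp_sm_last: "positive_path k vs \<Longrightarrow> sm (last vs) = n"
  using pp_last term_sm by blast

lemma pp_last_form:
  assumes vs: "positive_path k vs" shows "\<exists>a. last vs = (a, n - a) \<and> a \<in> PSet \<and> a \<le> n"
proof -
  obtain a b where ab: "last vs = (a, b)" by (cases "last vs")
  then have "a \<in> PSet \<and> b = n - a" using pp_last[OF vs] term_iff by simp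
  then show ?thesis using ab PSet_le by blast
qed

lemma gg_B_mono:
  assumes vs: "positive_path k vs"
  shows "gg vs (i + 1, j) \<le> gg vs (i, j)"
proof (cases "\<exists>b < j. (i + 1, b) \<in> set vs")
  case True
  then obtain b where b: "b < j" "(i + 1, b) \<in> set vs" by blast
  have "fst (hd vs) \<le> i" using pp_hd[OF vs] by simp
  then obtain c where "c \<le> snd (i + 1, b)" "(i, c) \<in> set vs"
    using wk_down[OF pp_wk[OF vs] QE_Gamma b(2), of i] by auto
  then have "gg vs (i, j) = 1" using b by (auto simp: gg_def intro!: exI[of _ c])
  then show ?thesis using gg_01[of vs "(i+1,j)"] by auto
next
  case False then have "gg vs (i + 1, j) = 0" by (simp add: gg_def)
  then show ?thesis using gg_01[of vs "(i,j)"] by auto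
qed

lemma gg_A_strict:
  assumes vs: "positive_path k vs" and ij: "1 \<le> i" "1 \<le> j"
  shows "gg vs (i, j) < gg vs (i, j + 1) \<longleftrightarrow> ((i - 1, j), (i, j)) \<in> pe vs"
proof
  assume "gg vs (i, j) < gg vs (i, j + 1)"
  then have no: "\<not> (\<exists>b < j. (i, b) \<in> set vs)" and yes: "\<exists>b < j + 1. (i, b) \<in> set vs"
    by (auto simp: gg_def split: if_splits)
  then have ijs: "(i, j) \<in> set vs" using less_Suc_eq by auto
  have "(i, j) \<noteq> hd vs" using pp_hd[OF vs] ij by auto
  then obtain u where u: "(u, (i, j)) \<in> pe vs" using wk_pred[OF pp_wk[OF vs] ijs] by blast
  have q: "qstep u (i, j)" using pe_qstep[OF pp_wk[OF vs] QE_Gamma u] .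
  have us: "u \<in> set vs" using pe_set[OF u] by blast
  show "((i - 1, j), (i, j)) \<in> pe vs"
  proof (cases "(i, j) = (fst u + 1, snd u)")
    case True then have "u = (i - 1, j)" by (cases u) auto
    then show ?thesis using u by simp
  next
    case False then have "(i, j) = (fst u, snd u + 1)" using q by (auto simp: qstep_def)
    then have "u = (i, j - 1)" by (cases u) auto
    then show ?thesis using us no ij by auto
  qed
next
  assume e: "((i - 1, j), (i, j)) \<in> pe vs"
  then have s: "(i - 1, j) \<in> set vs" "(i, j) \<in> set vs" using pe_set[OF e] by auto
  have "gg vs (i, j + 1) = 1" using s by (auto simp: gg_def)
  moreover have "gg vs (i, j) = 0"
  proof (rule ccontr)
    assume "gg vs (i, j) \<noteq> 0"
    then obtain b where b: "b < j" "(i, b) \<in> set vs" by (auto simp: gg_def split: if_splits)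
    have "le2 (i, b) (i - 1, j) \<or> le2 (i - 1, j) (i, b)" using wk_chain[OF pp_wk[OF vs] QE_Gamma b(2) s(1)] .
    then show False using b ij by (auto simp: le2_def)
  qed
  ultimately show "gg vs (i, j) < gg vs (i, j + 1)" by simp
qed

lemma gg_B_strict:
  assumes vs: "positive_path k vs" and ij: "(i, j) \<in> I"
  shows "gg vs (i + 1, j) < gg vs (i, j) \<longleftrightarrow> ((i, j - 1), (i, j)) \<in> pe vs"
proof
  have ij': "1 \<le> i" "1 \<le> j" "i + j \<le> n" using ij by (auto simp: I_iff)
  assume "gg vs (i + 1, j) < gg vs (i, j)"
  then have no: "\<not> (\<exists>b < j. (i + 1, b) \<in> set vs)" and yes: "\<exists>b < j. (i, b) \<in> set vs"
    by (auto simp: gg_def split: if_splits)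
  then obtain b0 where b0: "b0 < j" "(i, b0) \<in> set vs" by blast
  have wk: "wk (Gamma_edges k) vs" using pp_wk[OF vs] .
  have "sm (hd vs) \<le> i + j - 1" "i + j - 1 \<le> sm (last vs)" using pp_hd[OF vs] pp_sm_last[OF vs] ij' by auto
  then obtain u where u: "u \<in> set vs" "sm u = i + j - 1" using wk_sm_exists[OF wk QE_Gamma] by blast
  have fu: "fst u \<ge> i"
  proof -
    have "le2 u (i, b0) \<or> le2 (i, b0) u" using wk_chain[OF wk QE_Gamma u(1) b0(2)] .
    then show ?thesis using u b0 by (auto simp: le2_def)
  qed
  have fu2: "fst u = i"
  proof (rule ccontr)
    assume "fst u \<noteq> i"
    then have "i + 1 \<le> fst u" using fu by simp
    moreover have "fst (hd vs) \<le> i + 1" using pp_hd[OF vs] by simp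
    ultimately obtain c where c: "c \<le> snd u" "(i + 1, c) \<in> set vs" using wk_down[OF wk QE_Gamma u(1)] by blast
    have "c < j" using c u \<open>i + 1 \<le> fst u\<close> ij' by linarith
    then show False using no c by blast
  qed
  then have ueq: "u = (i, j - 1)" using u ij' by (cases u) auto
  have "u \<noteq> last vs" using u pp_sm_last[OF vs] ij' by auto
  then obtain w where w: "(u, w) \<in> pe vs" using wk_succ[OF wk u(1)] by blast
  have q: "qstep u w" using pe_qstep[OF wk QE_Gamma w] .
  have ws: "w \<in> set vs" using pe_set[OF w] by blast
  show "((i, j - 1), (i, j)) \<in> pe vs"
  proof (cases "w = (fst u + 1, snd u)")
    case True
    then have "w = (i + 1, j - 1)" using ueq by simp
    then show ?thesis using ws no ij' by auto
  next
    case False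
    then have "w = (i, j)" using q ueq ij' by (auto simp: qstep_def)
    then show ?thesis using w ueq by simp
  qed
next
  have ij': "1 \<le> i" "1 \<le> j" "i + j \<le> n" using ij by (auto simp: I_iff)
  assume e: "((i, j - 1), (i, j)) \<in> pe vs"
  then have s: "(i, j - 1) \<in> set vs" "(i, j) \<in> set vs" using pe_set[OF e] by auto
  have "gg vs (i, j) = 1" using s ij' by (auto simp: gg_def intro!: exI[of _ "j - 1"])
  moreover have "gg vs (i + 1, j) = 0"
  proof (rule ccontr)
    assume "gg vs (i + 1, j) \<noteq> 0"
    then obtain b where b: "b < j" "(i + 1, b) \<in> set vs" by (auto simp: gg_def split: if_splits)
    have "le2 (i + 1, b) (i, j) \<or> le2 (i, j) (i + 1, b)" using wk_chain[OF pp_wk[OF vs] QE_Gamma b(2) s(2)] .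
    then show False using b by (auto simp: le2_def)
  qed
  ultimately show "gg vs (i + 1, j) < gg vs (i, j)" by simp
qed

lemma gg_bd:
  assumes vs: "positive_path k vs" and i: "1 \<le> i" "i \<le> n"
  shows "gg vs (i, n + 1 - i) = (if i \<le> fst (last vs) then 1 else 0)"
proof -
  obtain a where a: "last vs = (a, n - a)" "a \<le> n" using pp_last_form[OF vs] by blast
  have "(\<exists>b < n + 1 - i. (i, b) \<in> set vs) \<longleftrightarrow> i \<le> a"
  proof
    assume "\<exists>b < n + 1 - i. (i, b) \<in> set vs"
    then obtain b where "(i, b) \<in> set vs" by blast
    then have "le2 (i, b) (last vs)" using pp_le_last[OF vs] by blast
    then show "i \<le> a" using a by (simp add: le2_def)
  next
    assume ia: "i \<le> a"
    have "last vs \<in> set vs" using pp_len[OF vs] by (cases vs) auto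
    moreover have "fst (hd vs) \<le> i" using pp_hd[OF vs] by simp
    ultimately obtain c where "c \<le> snd (last vs)" "(i, c) \<in> set vs"
      using wk_down[OF pp_wk[OF vs] QE_Gamma, of "last vs" i] ia a by auto
    then show "\<exists>b < n + 1 - i. (i, b) \<in> set vs" using a ia i by (intro exI[of _ c]) auto
  qed
  then show ?thesis using a by (simp add: gg_def)
qed

lemma tele: "i \<le> m \<Longrightarrow> (\<Sum>a\<in>{i..<m}. lam a - lam (a + 1)) = lam i - lam m"
proof (induction m)
  case 0 then show ?case by simp
next
  case (Suc m)
  show ?case
  proof (cases "i = Suc m")
    case True then show ?thesis by simp
  next
    case False
    then have "i \<le> m" using Suc by simp
    then show ?thesis using Suc by simp
  qed
qed

end


lemma sum_strict_iff:
  fixes w L U :: "'a \<Rightarrow> real"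
  assumes fin: "finite A" and h: "\<forall>a\<in>A. 0 \<le> w a \<and> L a \<le> U a"
  shows "(\<Sum>a\<in>A. w a * L a) < (\<Sum>a\<in>A. w a * U a) \<longleftrightarrow> (\<exists>a\<in>A. 0 < w a \<and> L a < U a)"
proof
  assume "(\<Sum>a\<in>A. w a * L a) < (\<Sum>a\<in>A. w a * U a)"
  show "\<exists>a\<in>A. 0 < w a \<and> L a < U a"
  proof (rule ccontr)
    assume "\<not> (\<exists>a\<in>A. 0 < w a \<and> L a < U a)"
    then have "\<forall>a\<in>A. w a * L a = w a * U a" using h by (metis antisym_conv1 mult_zero_left not_less)
    then have "(\<Sum>a\<in>A. w a * L a) = (\<Sum>a\<in>A. w a * U a)" by (intro sum.cong) auto
    then show False using \<open>(\<Sum>a\<in>A. w a * L a) < (\<Sum>a\<in>A. w a * U a)\<close> by simp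
  qed
next
  assume "\<exists>a\<in>A. 0 < w a \<and> L a < U a"
  then obtain a where a: "a \<in> A" "0 < w a" "L a < U a" by blast
  show "(\<Sum>a\<in>A. w a * L a) < (\<Sum>a\<in>A. w a * U a)"
  proof (rule sum_strict_mono_ex1[OF fin])
    show "\<forall>x\<in>A. w x * L x \<le> w x * U x" using h by (simp add: mult_left_mono)
    show "\<exists>a\<in>A. w a * L a < w a * U a" using a by (intro bexI[of _ a]) auto
  qed
qed

lemma sum_le_w:
  fixes w L U :: "'a \<Rightarrow> real"
  assumes h: "\<forall>a\<in>A. 0 \<le> w a \<and> L a \<le> U a"
  shows "(\<Sum>a\<in>A. w a * L a) \<le> (\<Sum>a\<in>A. w a * U a)"
  using h by (intro sum_mono) (simp add: mult_left_mono)

context GT begin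
context
  fixes Ps :: "(nat \<times> nat) list set"
  assumes PsP: "\<forall>vs\<in>Ps. positive_path k vs"
    and termPs: "terminals k \<subseteq> (\<Union>vs\<in>Ps. set vs)"
begin

lemma finite_Ps: "finite Ps"
proof -
  have "Ps \<subseteq> {xs. set xs \<subseteq> {0..n} \<times> {0..n} \<and> length xs \<le> n + 1}"
  proof
    fix vs assume vs: "vs \<in> Ps"
    then have pp: "positive_path k vs" using PsP by blast
    obtain a where a: "last vs = (a, n - a)" "a \<le> n" using pp_last_form[OF pp] by blast
    have "set vs \<subseteq> {0..n} \<times> {0..n}"
    proof
      fix w assume "w \<in> set vs"
      then have "le2 w (last vs)" using pp_le_last[OF pp] by blast
      then show "w \<in> {0..n} \<times> {0..n}" using a by (cases w) (auto simp: le2_def)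
    qed
    then show "vs \<in> {xs. set xs \<subseteq> {0..n} \<times> {0..n} \<and> length xs \<le> n + 1}" using pp_len[OF pp] by simp
  qed
  moreover have "finite {xs. set xs \<subseteq> {0..n} \<times> {0..n} \<and> length xs \<le> n + 1}"
    by (rule finite_lists_length_le) simp
  ultimately show ?thesis using finite_subset by blast
qed

definition mm :: "nat \<Rightarrow> nat" where "mm a = card {vs\<in>Ps. fst (last vs) = a}"
definition dd :: "nat \<Rightarrow> real" where "dd a = lam a - lam (a + 1)"
definition wt :: "(nat \<times> nat) list \<Rightarrow> real" where
  "wt vs = (if 0 < fst (last vs) \<and> fst (last vs) < n then dd (fst (last vs)) / real (mm (fst (last vs))) else 0)"

lemma last_eq_term:
  assumes vs: "vs \<in> Ps" and t: "(a, n - a) \<in> set vs" and an: "a \<le> n"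
  shows "last vs = (a, n - a)"
proof -
  have pp: "positive_path k vs" using PsP vs by blast
  have "le2 (a, n - a) (last vs)" using pp_le_last[OF pp t] .
  moreover have "sm (last vs) = sm (a, n - a)" using pp_sm_last[OF pp] an by simp
  ultimately show ?thesis using le2_sm_eq by metis
qed

lemma mm_pos:
  assumes a: "a \<in> PSet" shows "0 < mm a"
proof -
  have an: "a \<le> n" using PSet_le a by simp
  have "(a, n - a) \<in> terminals k" using a by (simp add: term_iff)
  then obtain vs where vs: "vs \<in> Ps" "(a, n - a) \<in> set vs" using termPs by blast
  then have "last vs = (a, n - a)" using last_eq_term an by blast
  then have "vs \<in> {vs\<in>Ps. fst (last vs) = a}" using vs by simp
  moreover have "finite {vs\<in>Ps. fst (last vs) = a}" using finite_Ps by simp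
  ultimately show ?thesis unfolding mm_def by (metis card_gt_0_iff empty_iff)
qed

lemma dd_nonneg: "0 < a \<Longrightarrow> a < n \<Longrightarrow> 0 \<le> dd a"
  using lam_mono[of a] by (simp add: dd_def)

lemma dd_zero: "0 < a \<Longrightarrow> a < n \<Longrightarrow> mm a = 0 \<Longrightarrow> dd a = 0"
proof -
  assume a: "0 < a" "a < n" "mm a = 0"
  then have "a \<notin> PSet" using mm_pos by fastforce
  then show "dd a = 0" using blk_eq[of a] a by (simp add: dd_def)
qed

lemma wt_nonneg: "0 \<le> wt vs"
  unfolding wt_def using dd_nonneg by auto

lemma wt_pos:
  assumes vs: "vs \<in> Ps" and ij: "(i, j) \<in> set vs" "1 \<le> i" "1 \<le> j"
  shows "0 < wt vs"
proof -
  have pp: "positive_path k vs" using PsP vs by blast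
  obtain a where a: "last vs = (a, n - a)" "a \<in> PSet" "a \<le> n" using pp_last_form[OF pp] by blast
  have "le2 (i, j) (last vs)" using pp_le_last[OF pp ij(1)] .
  then have "i \<le> a" "j \<le> n - a" using a by (auto simp: le2_def)
  then have a': "0 < a" "a < n" using ij by auto
  have "0 < dd a" using stp_lt[OF a(2) a'] by (simp add: dd_def)
  moreover have "0 < mm a" using mm_pos[OF a(2)] .
  ultimately show ?thesis unfolding wt_def using a a' by simp
qed

definition xx :: "nat \<times> nat \<Rightarrow> real" where
  "xx c = (if c \<in> I then lam n + (\<Sum>vs\<in>Ps. wt vs * gg vs c) else 0)"

lemma bsum:
  assumes i: "1 \<le> i" "i \<le> n"
  shows "(\<Sum>vs\<in>Ps. wt vs * gg vs (i, n + 1 - i)) = lam i - lam n"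
proof -
  have fin: "finite Ps" by (rule finite_Ps)
  have "(\<Sum>vs\<in>Ps. wt vs * gg vs (i, n + 1 - i)) = (\<Sum>vs\<in>Ps. (if i \<le> fst (last vs) then wt vs else 0))"
  proof (rule sum.cong[OF refl])
    fix vs assume "vs \<in> Ps"
    then have "positive_path k vs" using PsP by blast
    then show "wt vs * gg vs (i, n + 1 - i) = (if i \<le> fst (last vs) then wt vs else 0)"
      using gg_bd[OF _ i] by simp
  qed
  also have "\<dots> = (\<Sum>a\<in>{0..n}. \<Sum>vs\<in>{vs\<in>Ps. fst (last vs) = a}. (if i \<le> fst (last vs) then wt vs else 0))"
  proof (rule sum.group[symmetric, OF fin])
    show "finite {0..n}" by simp
    show "(\<lambda>vs. fst (last vs)) ` Ps \<subseteq> {0..n}"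
    proof
      fix a assume "a \<in> (\<lambda>vs. fst (last vs)) ` Ps"
      then obtain vs where "vs \<in> Ps" "a = fst (last vs)" by blast
      then show "a \<in> {0..n}" using pp_last_form PsP by fastforce
    qed
  qed
  also have "\<dots> = (\<Sum>a\<in>{0..n}. (if a \<in> {i..<n} then dd a else 0))"
  proof (rule sum.cong[OF refl])
    fix a assume "a \<in> {0..n}"
    have "(\<Sum>vs\<in>{vs\<in>Ps. fst (last vs) = a}. (if i \<le> fst (last vs) then wt vs else 0))
        = (\<Sum>vs\<in>{vs\<in>Ps. fst (last vs) = a}. (if i \<le> a \<and> 0 < a \<and> a < n then dd a / real (mm a) else 0))"
      by (rule sum.cong) (auto simp: wt_def)
    also have "\<dots> = real (mm a) * (if i \<le> a \<and> 0 < a \<and> a < n then dd a / real (mm a) else 0)"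
      by (simp add: mm_def)
    also have "\<dots> = (if a \<in> {i..<n} then dd a else 0)"
    proof (cases "i \<le> a \<and> a < n")
      case True
      then have a0: "0 < a" using i by simp
      show ?thesis
      proof (cases "mm a = 0")
        case True then show ?thesis using dd_zero[OF a0] \<open>i \<le> a \<and> a < n\<close> by simp
      next
        case False then show ?thesis using \<open>i \<le> a \<and> a < n\<close> a0 by simp
      qed
    next
      case False then show ?thesis by auto
    qed
    finally show "(\<Sum>vs\<in>{vs\<in>Ps. fst (last vs) = a}. (if i \<le> fst (last vs) then wt vs else 0)) = (if a \<in> {i..<n} then dd a else 0)" .
  qed
  also have "\<dots> = (\<Sum>a\<in>{0..n} \<inter> {i..<n}. dd a)" by (rule sum.inter_restrict[symmetric]) simp
  also have "{0..n} \<inter> {i..<n} = {i..<n}" by auto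
  also have "(\<Sum>a\<in>{i..<n}. dd a) = lam i - lam n" unfolding dd_def using tele i by simp
  finally show ?thesis .
qed

lemma vxx:
  assumes ij: "1 \<le> i" "1 \<le> j" "i + j \<le> n + 1"
  shows "v xx (i, j) = lam n + (\<Sum>vs\<in>Ps. wt vs * gg vs (i, j))"
proof (cases "i + j \<le> n")
  case True
  then have "(i, j) \<in> I" using ij by (simp add: I_iff)
  then show ?thesis by (simp add: v_int xx_def)
next
  case False
  then have e: "i + j = n + 1" using ij by simp
  then have j: "j = n + 1 - i" by simp
  have "i \<le> n" using ij e by simp
  then show ?thesis using v_bd[OF e] bsum ij j by simp
qed

lemma wt_gg_A: "\<forall>vs\<in>Ps. 0 \<le> wt vs \<and> gg vs (i, j) \<le> gg vs (i, j + 1)"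
  using wt_nonneg gg_A_mono by blast

lemma wt_gg_B: "\<forall>vs\<in>Ps. 0 \<le> wt vs \<and> gg vs (i + 1, j) \<le> gg vs (i, j)"
  using wt_nonneg gg_B_mono PsP by blast

lemma xx_P: "xx \<in> P"
  unfolding P_iff
proof (intro conjI allI impI ballI)
  fix p assume "p \<notin> I" then show "xx p = 0" by (simp add: xx_def)
next
  fix c assume c: "c \<in> Cs"
  show "lo xx c \<le> hi xx c"
  proof (cases c)
    case (CA i j)
    then have ij: "1 \<le> i" "1 \<le> j" "i + j \<le> n" using c by (auto simp: Cs_def I_iff)
    show ?thesis using CA vxx[of i j] vxx[of i "j+1"] ij sum_le_w[OF wt_gg_A[of i j]] by simp
  next
    case (CB i j)
    then have ij: "1 \<le> i" "1 \<le> j" "i + j \<le> n" using c by (auto simp: Cs_def I_iff)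
    show ?thesis using CB vxx[of i j] vxx[of "i+1" j] ij sum_le_w[OF wt_gg_B[of i j]] by simp
  qed
qed

lemma xx_str:
  assumes c: "c \<in> Cs"
  shows "lo xx c < hi xx c \<longleftrightarrow> edge c \<in> (\<Union>vs\<in>Ps. pe vs)"
proof (cases c)
  case (CA i j)
  then have ij: "1 \<le> i" "1 \<le> j" "i + j \<le> n" using c by (auto simp: Cs_def I_iff)
  have "lo xx c < hi xx c \<longleftrightarrow> (\<Sum>vs\<in>Ps. wt vs * gg vs (i, j)) < (\<Sum>vs\<in>Ps. wt vs * gg vs (i, j + 1))"
    using CA vxx[of i j] vxx[of i "j+1"] ij by simp
  also have "\<dots> \<longleftrightarrow> (\<exists>vs\<in>Ps. 0 < wt vs \<and> gg vs (i, j) < gg vs (i, j + 1))"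
    by (rule sum_strict_iff[OF finite_Ps wt_gg_A])
  also have "\<dots> \<longleftrightarrow> (\<exists>vs\<in>Ps. ((i - 1, j), (i, j)) \<in> pe vs)"
  proof
    assume "\<exists>vs\<in>Ps. 0 < wt vs \<and> gg vs (i, j) < gg vs (i, j + 1)"
    then show "\<exists>vs\<in>Ps. ((i - 1, j), (i, j)) \<in> pe vs" using gg_A_strict ij PsP by blast
  next
    assume "\<exists>vs\<in>Ps. ((i - 1, j), (i, j)) \<in> pe vs"
    then obtain vs where vs: "vs \<in> Ps" "((i - 1, j), (i, j)) \<in> pe vs" by blast
    have "(i, j) \<in> set vs" using pe_set[OF vs(2)] by simp
    then have "0 < wt vs" using wt_pos vs ij by blast
    moreover have "gg vs (i, j) < gg vs (i, j + 1)" using gg_A_strict[of vs i j] vs ij PsP by blast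
    ultimately show "\<exists>vs\<in>Ps. 0 < wt vs \<and> gg vs (i, j) < gg vs (i, j + 1)" using vs by blast
  qed
  finally show ?thesis using CA by simp
next
  case (CB i j)
  then have ij: "1 \<le> i" "1 \<le> j" "i + j \<le> n" using c by (auto simp: Cs_def I_iff)
  have ijI: "(i, j) \<in> I" using ij by (simp add: I_iff)
  have "lo xx c < hi xx c \<longleftrightarrow> (\<Sum>vs\<in>Ps. wt vs * gg vs (i + 1, j)) < (\<Sum>vs\<in>Ps. wt vs * gg vs (i, j))"
    using CB vxx[of i j] vxx[of "i+1" j] ij by simp
  also have "\<dots> \<longleftrightarrow> (\<exists>vs\<in>Ps. 0 < wt vs \<and> gg vs (i + 1, j) < gg vs (i, j))"
    by (rule sum_strict_iff[OF finite_Ps wt_gg_B])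
  also have "\<dots> \<longleftrightarrow> (\<exists>vs\<in>Ps. ((i, j - 1), (i, j)) \<in> pe vs)"
  proof
    assume "\<exists>vs\<in>Ps. 0 < wt vs \<and> gg vs (i + 1, j) < gg vs (i, j)"
    then show "\<exists>vs\<in>Ps. ((i, j - 1), (i, j)) \<in> pe vs" using gg_B_strict ijI PsP by blast
  next
    assume "\<exists>vs\<in>Ps. ((i, j - 1), (i, j)) \<in> pe vs"
    then obtain vs where vs: "vs \<in> Ps" "((i, j - 1), (i, j)) \<in> pe vs" by blast
    have "(i, j) \<in> set vs" using pe_set[OF vs(2)] by simp
    then have "0 < wt vs" using wt_pos vs ij by blast
    moreover have "gg vs (i + 1, j) < gg vs (i, j)" using gg_B_strict[of vs i j] vs ijI PsP by blast
    ultimately show "\<exists>vs\<in>Ps. 0 < wt vs \<and> gg vs (i + 1, j) < gg vs (i, j)" using vs by blast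
  qed
  finally show ?thesis using CB by simp
qed

end
end


context GT begin
context
  fixes Ps :: "(nat \<times> nat) list set"
  assumes PsP: "\<forall>vs\<in>Ps. positive_path k vs"
    and termPs: "terminals k \<subseteq> (\<Union>vs\<in>Ps. set vs)"
begin

lemma AX_sub: "AX \<subseteq> (\<Union>vs\<in>Ps. pe vs)"
proof
  fix e assume e: "e \<in> AX"
  then consider (L) q where "e = ((0, q), (0, q + 1))" "q \<le> n - 1"
    | (R) q where "e = ((q, 0), (q + 1, 0))" "q \<le> n - 1" by (auto simp: AX_def)
  then show "e \<in> (\<Union>vs\<in>Ps. pe vs)"
  proof cases
    case L
    have "(0, n - 0) \<in> terminals k" using zero_PSet by (simp add: term_iff)
    then obtain vs where vs: "vs \<in> Ps" "(0, n) \<in> set vs" using termPs by auto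
    have pp: "positive_path k vs" using PsP vs by blast
    have la: "last vs = (0, n)" using last_eq_term[OF PsP termPs vs(1), of 0] vs by simp
    have f0: "\<And>w. w \<in> set vs \<Longrightarrow> fst w = 0" using pp_le_last[OF pp] la by (force simp: le2_def)
    have "sm (hd vs) \<le> q" "q \<le> sm (last vs)" using pp_hd[OF pp] la L n_pos by auto
    then obtain w where w: "w \<in> set vs" "sm w = q" using wk_sm_exists[OF pp_wk[OF pp] QE_Gamma] by blast
    have "fst w = 0" using f0[OF w(1)] .
    then have weq: "w = (0, q)" using w(2) by (simp add: prod_eq_iff)
    have "w \<noteq> last vs" using weq la L n_pos by auto
    then obtain w' where w': "(w, w') \<in> pe vs" using wk_succ[OF pp_wk[OF pp] w(1)] by blast
    have q: "qstep w w'" using pe_qstep[OF pp_wk[OF pp] QE_Gamma w'] .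
    have "w' \<in> set vs" using pe_set[OF w'] by simp
    then have "fst w' = 0" using f0 by blast
    then have "w' = (0, q + 1)" using q weq by (auto simp: qstep_def)
    then show ?thesis using w' weq L vs(1) by blast
  next
    case R
    have "(n, n - n) \<in> terminals k" using n_PSet by (simp add: term_iff)
    then obtain vs where vs: "vs \<in> Ps" "(n, 0) \<in> set vs" using termPs by auto
    have pp: "positive_path k vs" using PsP vs by blast
    have la: "last vs = (n, 0)" using last_eq_term[OF PsP termPs vs(1), of n] vs by simp
    have f0: "\<And>w. w \<in> set vs \<Longrightarrow> snd w = 0" using pp_le_last[OF pp] la by (force simp: le2_def)
    have "sm (hd vs) \<le> q" "q \<le> sm (last vs)" using pp_hd[OF pp] la R n_pos by auto
    then obtain w where w: "w \<in> set vs" "sm w = q" using wk_sm_exists[OF pp_wk[OF pp] QE_Gamma] by blast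
    have "snd w = 0" using f0[OF w(1)] .
    then have weq: "w = (q, 0)" using w(2) by (simp add: prod_eq_iff)
    have "w \<noteq> last vs" using weq la R n_pos by auto
    then obtain w' where w': "(w, w') \<in> pe vs" using wk_succ[OF pp_wk[OF pp] w(1)] by blast
    have q: "qstep w w'" using pe_qstep[OF pp_wk[OF pp] QE_Gamma w'] .
    have "w' \<in> set vs" using pe_set[OF w'] by simp
    then have "snd w' = 0" using f0 by blast
    then have "w' = (q + 1, 0)" using q weq by (auto simp: qstep_def)
    then show ?thesis using w' weq R vs(1) by blast
  qed
qed

lemma edge_class:
  assumes vs: "vs \<in> Ps" and e: "e \<in> pe vs"
  shows "e \<in> AX \<or> (\<exists>c\<in>Cs. e = edge c)"
proof -
  have pp: "positive_path k vs" using PsP vs by blast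
  obtain a b w where uw: "e = ((a, b), w)" by (metis prod.collapse)
  have e': "((a, b), w) \<in> pe vs" using e uw by simp
  have q: "qstep (a, b) w" using pe_qstep[OF pp_wk[OF pp] QE_Gamma e'] .
  have "w \<in> set vs" using pe_set[OF e'] by simp
  then have "le2 w (last vs)" using pp_le_last[OF pp] by blast
  then have smw: "sm w \<le> n" using pp_sm_last[OF pp] unfolding le2_def by linarith
  show ?thesis
  proof (cases "w = (a + 1, b)")
    case True
    then have smw': "a + 1 + b \<le> n" using smw by simp
    show ?thesis
    proof (cases "b = 0")
      case True
      have "a \<le> n - 1" using smw' by simp
      then have "((a, 0), (a + 1, 0)) \<in> AX" unfolding AX_def by blast
      then have "e \<in> AX" using uw \<open>w = (a + 1, b)\<close> True by simp
      then show ?thesis by blast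
    next
      case False
      then have "CA (a + 1) b \<in> Cs" using smw' by (simp add: Cs_def I_iff)
      moreover have "e = edge (CA (a + 1) b)" using uw \<open>w = (a + 1, b)\<close> by simp
      ultimately show ?thesis by blast
    qed
  next
    case False
    then have wb: "w = (a, b + 1)" using q by (simp add: qstep_def)
    then have smw': "a + (b + 1) \<le> n" using smw by simp
    show ?thesis
    proof (cases "a = 0")
      case True
      have "b \<le> n - 1" using smw' by simp
      then have "((0, b), (0, b + 1)) \<in> AX" unfolding AX_def by blast
      then have "e \<in> AX" using uw wb True by simp
      then show ?thesis by blast
    next
      case False
      then have "CB a (b + 1) \<in> Cs" using smw' by (simp add: Cs_def I_iff)
      moreover have "e = edge (CB a (b + 1))" using uw wb by simp
      ultimately show ?thesis by blast
    qed
  qed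
qed

lemma set_ends: "(\<Union>vs\<in>Ps. set vs) = ends (\<Union>vs\<in>Ps. pe vs)"
proof
  show "(\<Union>vs\<in>Ps. set vs) \<subseteq> ends (\<Union>vs\<in>Ps. pe vs)"
  proof
    fix x assume "x \<in> (\<Union>vs\<in>Ps. set vs)"
    then obtain vs where vs: "vs \<in> Ps" "x \<in> set vs" by blast
    have pp: "positive_path k vs" using PsP vs(1) by blast
    have len: "length vs \<ge> 2" using pp_len[OF pp] n_pos by simp
    have "(\<exists>y. (x,y) \<in> pe vs) \<or> (\<exists>y. (y,x) \<in> pe vs)" using set_in_pe[OF len vs(2)] .
    then show "x \<in> ends (\<Union>vs\<in>Ps. pe vs)"
    proof
      assume "\<exists>y. (x,y) \<in> pe vs"
      then obtain y where "(x,y) \<in> pe vs" by blast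
      then have "(x,y) \<in> (\<Union>vs\<in>Ps. pe vs)" using vs(1) by blast
      then show ?thesis unfolding ends_def by blast
    next
      assume "\<exists>y. (y,x) \<in> pe vs"
      then obtain y where "(y,x) \<in> pe vs" by blast
      then have "(y,x) \<in> (\<Union>vs\<in>Ps. pe vs)" using vs(1) by blast
      then show ?thesis unfolding ends_def by blast
    qed
  qed
  show "ends (\<Union>vs\<in>Ps. pe vs) \<subseteq> (\<Union>vs\<in>Ps. set vs)"
  proof
    fix x assume "x \<in> ends (\<Union>vs\<in>Ps. pe vs)"
    then obtain y where "(x, y) \<in> (\<Union>vs\<in>Ps. pe vs) \<or> (y, x) \<in> (\<Union>vs\<in>Ps. pe vs)" unfolding ends_def by blast
    then obtain vs where vs: "vs \<in> Ps" "(x, y) \<in> pe vs \<or> (y, x) \<in> pe vs" by blast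
    from vs(2) have "x \<in> set vs"
    proof
      assume "(x, y) \<in> pe vs" then show ?thesis using pe_set[of x y vs] by simp
    next
      assume "(y, x) \<in> pe vs" then show ?thesis using pe_set[of y x vs] by simp
    qed
    then show "x \<in> (\<Union>vs\<in>Ps. set vs)" using vs(1) by blast
  qed
qed

lemma surj_aux:
  "\<exists>F. F face_of P \<and> F \<noteq> {} \<and> phi n lam F = ((\<Union>vs\<in>Ps. set vs), (\<Union>vs\<in>Ps. pe vs))"
proof -
  let ?x = "xx Ps"
  define S where "S = {c \<in> Cs. lo ?x c < hi ?x c}"
  define FF where "FF = FS S"
  have xP: "?x \<in> P" using xx_P[OF PsP termPs] .
  have xF: "?x \<in> FF"
  proof -
    have "\<forall>c\<in>Cs - S. lo ?x c = hi ?x c"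
    proof
      fix c assume c: "c \<in> Cs - S"
      then have "lo ?x c \<le> hi ?x c" using xP by (auto simp: P_iff)
      then show "lo ?x c = hi ?x c" using c by (auto simp: S_def)
    qed
    then show ?thesis using xP by (simp add: FF_def FS_def)
  qed
  have face: "FF face_of P" unfolding FF_def by (rule FS_face)
  have strF: "str FF = S"
  proof
    show "str FF \<subseteq> S"
    proof
      fix c assume c: "c \<in> str FF"
      then obtain y where y: "y \<in> FF" "lo y c < hi y c" "c \<in> Cs" by (auto simp: str_def)
      show "c \<in> S"
      proof (rule ccontr)
        assume "c \<notin> S"
        then have "lo y c = hi y c" using y by (auto simp: FF_def FS_def)
        then show False using y by simp
      qed
    qed
    show "S \<subseteq> str FF" using xF by (auto simp: S_def str_def)
  qed
  have SE: "S = {c \<in> Cs. edge c \<in> (\<Union>vs\<in>Ps. pe vs)}"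
    unfolding S_def using xx_str[OF PsP termPs] by blast
  have EE: "EF FF = (\<Union>vs\<in>Ps. pe vs)"
  proof
    show "EF FF \<subseteq> (\<Union>vs\<in>Ps. pe vs)"
      unfolding EF_def strF SE using AX_sub by blast
    show "(\<Union>vs\<in>Ps. pe vs) \<subseteq> EF FF"
    proof
      fix e assume "e \<in> (\<Union>vs\<in>Ps. pe vs)"
      then obtain vs where vs: "vs \<in> Ps" "e \<in> pe vs" by blast
      then have "e \<in> AX \<or> (\<exists>c\<in>Cs. e = edge c)" using edge_class by blast
      then show "e \<in> EF FF"
      proof
        assume "e \<in> AX" then show ?thesis by (simp add: EF_def)
      next
        assume "\<exists>c\<in>Cs. e = edge c"
        then obtain c where "c \<in> Cs" "e = edge c" by blast
        then have "c \<in> S" using vs SE by blast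
        then show ?thesis using \<open>e = edge c\<close> strF by (simp add: EF_def)
      qed
    qed
  qed
  have "phi n lam FF = ((\<Union>vs\<in>Ps. set vs), (\<Union>vs\<in>Ps. pe vs))"
    unfolding phi_eq EE set_ends ..
  then show ?thesis using face xF by blast
qed

end

lemma surj:
  assumes H: "H \<in> Gamma_faces k"
  shows "\<exists>F\<in>nonempty_faces P. phi n lam F = H"
proof -
  obtain Ps where Ps: "terminals k \<subseteq> fst H" "\<forall>vs\<in>Ps. positive_path k vs"
    "fst H = (\<Union>vs\<in>Ps. fst (path_graph vs))" "snd H = (\<Union>vs\<in>Ps. snd (path_graph vs))"
    using H unfolding Gamma_faces_def by blast
  have fH: "fst H = (\<Union>vs\<in>Ps. set vs)" using Ps(3) by (simp add: path_graph_eq)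
  have sH: "snd H = (\<Union>vs\<in>Ps. pe vs)" using Ps(4) by (simp add: path_graph_eq)
  have tP: "terminals k \<subseteq> (\<Union>vs\<in>Ps. set vs)" using Ps(1) fH by simp
  obtain F where F: "F face_of P" "F \<noteq> {}" "phi n lam F = ((\<Union>vs\<in>Ps. set vs), (\<Union>vs\<in>Ps. pe vs))"
    using surj_aux[OF Ps(2) tP] by blast
  have Heq: "H = ((\<Union>vs\<in>Ps. set vs), (\<Union>vs\<in>Ps. pe vs))"
    by (rule prod_eqI) (simp_all only: fH sH fst_conv snd_conv)
  have "F \<in> nonempty_faces P" using F(1,2) by (simp add: nonempty_faces_def)
  moreover have "phi n lam F = H" unfolding Heq by (rule F(3))
  ultimately show ?thesis by blast
qed

end


lemma wk_rtrancl: "wk E vs \<Longrightarrow> (hd vs, last vs) \<in> E\<^sup>*"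
proof (induction E vs rule: wk.induct)
  case (3 E u x vs)
  then have "(u, x) \<in> E" "(x, last (x # vs)) \<in> E\<^sup>*" by auto
  then have "(u, last (x # vs)) \<in> E\<^sup>*" by (rule converse_rtrancl_into_rtrancl)
  then show ?case by simp
qed auto

context GT begin

definition Dset :: "(nat \<times> nat \<Rightarrow> real) set \<Rightarrow> (nat \<times> nat) set" where
  "Dset F = {(i, j) \<in> I. CA i j \<in> str F \<and> CB i j \<in> str F}"

lemma finite_EF: "finite (EF F)"
proof -
  have "EF F \<subseteq> ({0..n} \<times> {0..n}) \<times> ({0..n} \<times> {0..n})"
  proof
    fix e assume e: "e \<in> EF F"
    obtain a b c d where abcd: "e = ((a, b), (c, d))" by (metis prod.collapse)
    have "sm (c, d) \<le> n \<and> sm (a, b) < sm (c, d)" using EF_sm[of "(a,b)" "(c,d)" F] e abcd by simp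
    then show "e \<in> ({0..n} \<times> {0..n}) \<times> ({0..n} \<times> {0..n})" using abcd by auto
  qed
  then show ?thesis using finite_subset by blast
qed

lemma finite_V: "finite (ends (EF F))"
proof -
  have "ends (EF F) \<subseteq> {0..n} \<times> {0..n}"
  proof
    fix u assume "u \<in> ends (EF F)"
    then have "sm u \<le> n" by (rule ends_sm)
    then show "u \<in> {0..n} \<times> {0..n}" by (cases u) auto
  qed
  then show ?thesis using finite_subset by blast
qed

lemma origin_V: "(0, 0) \<in> ends (EF F)"
proof -
  have "((0, 0), (0, 0 + 1)) \<in> AX" unfolding AX_def by blast
  then have "((0, 0), (0, 1)) \<in> EF F" by (simp add: EF_def)
  then show ?thesis unfolding ends_def by blast
qed

lemma components_one:
  assumes FP: "F \<subseteq> P"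
  shows "card (graph_components (phi n lam F)) = 1"
proof -
  let ?V = "ends (EF F)" and ?E = "EF F"
  let ?S = "?E \<union> ?E\<inverse>"
  let ?R = "{(u, v). u \<in> ?V \<and> v \<in> ?V \<and> (u, v) \<in> ?S\<^sup>*}"
  have con: "((0, 0), u) \<in> ?S\<^sup>*" if u: "u \<in> ?V" for u
  proof -
    obtain vs where vs: "wk ?E vs" "hd vs = (0, 0)" "last vs = u" using root_walk[OF FP u] by blast
    have "(hd vs, last vs) \<in> ?E\<^sup>*" using wk_rtrancl[OF vs(1)] .
    then have "(hd vs, last vs) \<in> ?S\<^sup>*" using rtrancl_mono[of ?E ?S] by blast
    then show ?thesis using vs by simp
  qed
  have symS: "sym (?S\<^sup>*)" by (rule sym_rtrancl) (auto simp: sym_def)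
  have cls: "?R `` {x} = ?V" if x: "x \<in> ?V" for x
  proof
    show "?R `` {x} \<subseteq> ?V" by auto
    show "?V \<subseteq> ?R `` {x}"
    proof
      fix y assume y: "y \<in> ?V"
      have "(x, (0, 0)) \<in> ?S\<^sup>*" using con[OF x] symS by (meson symD)
      then have "(x, y) \<in> ?S\<^sup>*" using con[OF y] by (rule rtrancl_trans)
      then show "y \<in> ?R `` {x}" using x y by simp
    qed
  qed
  have "graph_components (phi n lam F) = ?V // ?R"
    by (simp add: graph_components_def phi_eq)
  also have "\<dots> = {?V}"
    unfolding quotient_def using cls origin_V by blast
  finally show ?thesis by simp
qed

lemma edge_count:
  assumes FP: "F \<subseteq> P"
  shows "card (EF F) + 1 = card (ends (EF F)) + card (Dset F)"
proof -
  let ?V = "ends (EF F)" and ?E = "EF F"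
  define Eh where "Eh = {e \<in> ?E. snd e = (fst (fst e) + 1, snd (fst e))}"
  define Ev where "Ev = {e \<in> ?E. snd e = (fst (fst e), snd (fst e) + 1)}"
  have finE: "finite ?E" by (rule finite_EF)
  have EhEv: "?E = Eh \<union> Ev"
  proof
    show "?E \<subseteq> Eh \<union> Ev"
    proof
      fix e assume e: "e \<in> ?E"
      obtain u w where uw: "e = (u, w)" by (cases e)
      have "qstep u w" using QE_step[OF EF_QE] e uw by blast
      then show "e \<in> Eh \<union> Ev" using e uw by (auto simp: Eh_def Ev_def qstep_def)
    qed
    show "Eh \<union> Ev \<subseteq> ?E" by (auto simp: Eh_def Ev_def)
  qed
  have disj: "Eh \<inter> Ev = {}" by (auto simp: Eh_def Ev_def)
  have finEh: "finite Eh" "finite Ev" using finE EhEv by (auto intro: finite_subset)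
  have cE: "card ?E = card Eh + card Ev" using EhEv disj finEh card_Un_disjoint by metis
  have injh: "inj_on snd Eh"
  proof (rule inj_onI)
    fix e1 e2 assume "e1 \<in> Eh" "e2 \<in> Eh" "snd e1 = snd e2"
    then show "e1 = e2" by (cases e1; cases e2) (auto simp: Eh_def)
  qed
  have injv: "inj_on snd Ev"
  proof (rule inj_onI)
    fix e1 e2 assume "e1 \<in> Ev" "e2 \<in> Ev" "snd e1 = snd e2"
    then show "e1 = e2" by (cases e1; cases e2) (auto simp: Ev_def)
  qed
  have cEh: "card Eh = card (snd ` Eh)" using card_image[OF injh] by simp
  have cEv: "card Ev = card (snd ` Ev)" using card_image[OF injv] by simp
  have U: "snd ` Eh \<union> snd ` Ev = ?V - {(0, 0)}"
  proof
    show "snd ` Eh \<union> snd ` Ev \<subseteq> ?V - {(0, 0)}"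
    proof
      fix w assume "w \<in> snd ` Eh \<union> snd ` Ev"
      then obtain u where e: "(u, w) \<in> ?E" unfolding Eh_def Ev_def by force
      then have "w \<in> ?V" unfolding ends_def by blast
      moreover have "w \<noteq> (0, 0)" using EF_sm[OF e] by auto
      ultimately show "w \<in> ?V - {(0, 0)}" by simp
    qed
    show "?V - {(0, 0)} \<subseteq> snd ` Eh \<union> snd ` Ev"
    proof
      fix w assume w: "w \<in> ?V - {(0, 0)}"
      then obtain u where e: "(u, w) \<in> ?E" using L_in[OF FP] by blast
      then have "(u, w) \<in> Eh \<union> Ev" using EhEv by blast
      then show "w \<in> snd ` Eh \<union> snd ` Ev" by (metis UnE UnI1 UnI2 image_eqI snd_conv)
    qed
  qed
  have Int: "snd ` Eh \<inter> snd ` Ev = Dset F"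
  proof
    show "snd ` Eh \<inter> snd ` Ev \<subseteq> Dset F"
    proof
      fix w assume w: "w \<in> snd ` Eh \<inter> snd ` Ev"
      obtain i j where ij: "w = (i, j)" by (cases w)
      from w obtain a b where h: "((a, b), w) \<in> ?E" "w = (a + 1, b)" unfolding Eh_def by force
      from w obtain a' b' where v: "((a', b'), w) \<in> ?E" "w = (a', b' + 1)" unfolding Ev_def by force
      have i1: "1 \<le> i" "1 \<le> j" using h(2) v(2) ij by auto
      have hA: "((i - 1, j), (i, j)) \<in> ?E" using h ij by auto
      have vB: "((i, j - 1), (i, j)) \<in> ?E" using v ij by auto
      have nAX: "((i - 1, j), (i, j)) \<notin> AX" "((i, j - 1), (i, j)) \<notin> AX" using i1 by (auto simp: AX_def)
      obtain c where c: "c \<in> str F" "edge c = ((i - 1, j), (i, j))" using hA nAX(1) by (auto simp: EF_def)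
      obtain c' where c': "c' \<in> str F" "edge c' = ((i, j - 1), (i, j))" using vB nAX(2) by (auto simp: EF_def)
      have "c = CA i j" using c(2) i1 by (cases c) auto
      moreover have "c' = CB i j" using c'(2) i1 by (cases c') auto
      moreover have "(i, j) \<in> I"
      proof -
        have "CA i j \<in> Cs" using c(1) str_sub \<open>c = CA i j\<close> by blast
        then show ?thesis by (simp add: Cs_def)
      qed
      ultimately show "w \<in> Dset F" using c c' ij by (simp add: Dset_def)
    qed
    show "Dset F \<subseteq> snd ` Eh \<inter> snd ` Ev"
    proof
      fix w assume w: "w \<in> Dset F"
      then obtain i j where ij: "w = (i, j)" "(i, j) \<in> I" "CA i j \<in> str F" "CB i j \<in> str F"
        by (auto simp: Dset_def)
      have i1: "1 \<le> i" "1 \<le> j" using ij by (auto simp: I_iff)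
      have "edge (CA i j) \<in> edge ` str F" "edge (CB i j) \<in> edge ` str F" using ij by blast+
      then have "edge (CA i j) \<in> ?E" "edge (CB i j) \<in> ?E" unfolding EF_def by blast+
      then have "((i - 1, j), (i, j)) \<in> Eh" "((i, j - 1), (i, j)) \<in> Ev" using i1 by (auto simp: Eh_def Ev_def)
      then show "w \<in> snd ` Eh \<inter> snd ` Ev" using ij by (metis IntI image_eqI snd_conv)
    qed
  qed
  have finT: "finite (snd ` Eh)" "finite (snd ` Ev)" using finEh by auto
  have "card (snd ` Eh) + card (snd ` Ev) = card (snd ` Eh \<union> snd ` Ev) + card (snd ` Eh \<inter> snd ` Ev)"
    using card_Un_Int[OF finT] .
  also have "\<dots> = card (?V - {(0, 0)}) + card (Dset F)" using U Int by simp
  also have "card (?V - {(0, 0)}) = card ?V - 1" using origin_V finite_V by (simp add: card_Diff_singleton)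
  finally have "card ?E = card ?V - 1 + card (Dset F)" using cE cEh cEv by simp
  moreover have "card ?V \<ge> 1" using origin_V finite_V by (metis One_nat_def Suc_leI card_gt_0_iff empty_iff)
  ultimately show ?thesis by simp
qed

lemma graph_dim_eq:
  assumes FP: "F \<subseteq> P"
  shows "graph_dim (phi n lam F) = int (card (Dset F))"
proof -
  have "graph_dim (phi n lam F) = int (card (EF F)) - int (card (ends (EF F))) + 1"
    using components_one[OF FP] by (simp add: graph_dim_def phi_eq)
  also have "\<dots> = int (card (Dset F))" using edge_count[OF FP] by linarith
  finally show ?thesis .
qed

end


function rt :: "nat \<Rightarrow> con set \<Rightarrow> nat \<times> nat \<Rightarrow> (nat \<times> nat) option" where
  "rt n S (i, j) = (if \<not> (1 \<le> i \<and> 1 \<le> j \<and> i + j \<le> n) then None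
     else if CA i j \<notin> S then rt n S (i, j + 1)
     else if CB i j \<notin> S then rt n S (i + 1, j)
     else Some (i, j))"
  by pat_completeness auto
termination by (relation "Wellfounded.measure (\<lambda>(n, S, (i, j)). n + 1 - (i + j))") auto

declare rt.simps[simp del]

lemma rt_D: "rt n S c = Some d \<Longrightarrow> (1 \<le> fst d \<and> 1 \<le> snd d \<and> fst d + snd d \<le> n) \<and> CA (fst d) (snd d) \<in> S \<and> CB (fst d) (snd d) \<in> S"
proof (induction n S c rule: rt.induct)
  case (1 n S i j)
  show ?case
  proof (cases "\<not> (1 \<le> i \<and> 1 \<le> j \<and> i + j \<le> n)")
    case True then show ?thesis using 1(3) by (simp add: rt.simps)
  next
    case nI: False
    show ?thesis
    proof (cases "CA i j \<notin> S")
      case True then show ?thesis using 1 nI by (simp add: rt.simps[of n S i j])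
    next
      case caS: False
      show ?thesis
      proof (cases "CB i j \<notin> S")
        case True then show ?thesis using 1 nI caS by (simp add: rt.simps[of n S i j])
      next
        case False then show ?thesis using 1(3) nI caS by (auto simp: rt.simps[of n S i j])
      qed
    qed
  qed
qed

lemma rt_none: "\<not> (1 \<le> i \<and> 1 \<le> j \<and> i + j \<le> n) \<Longrightarrow> rt n S (i, j) = None"
  by (simp add: rt.simps)

lemma rt_self: "1 \<le> i \<Longrightarrow> 1 \<le> j \<Longrightarrow> i + j \<le> n \<Longrightarrow> CA i j \<in> S \<Longrightarrow> CB i j \<in> S \<Longrightarrow> rt n S (i, j) = Some (i, j)"
  by (simp add: rt.simps)

lemma rt_A: "1 \<le> i \<Longrightarrow> 1 \<le> j \<Longrightarrow> i + j \<le> n \<Longrightarrow> CA i j \<notin> S \<Longrightarrow> rt n S (i, j) = rt n S (i, j + 1)"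
  by (simp add: rt.simps[of n S i j])

lemma rt_B: "1 \<le> i \<Longrightarrow> 1 \<le> j \<Longrightarrow> i + j \<le> n \<Longrightarrow> CA i j \<in> S \<Longrightarrow> CB i j \<notin> S \<Longrightarrow> rt n S (i, j) = rt n S (i + 1, j)"
  by (simp add: rt.simps[of n S i j])

context GT begin
context
  fixes F :: "(nat \<times> nat \<Rightarrow> real) set"
  assumes Fface: "F face_of P" and Fne: "F \<noteq> {}"
begin

definition zz :: "nat \<times> nat \<Rightarrow> real" where
  "zz = (SOME z. z \<in> F \<and> (\<forall>c\<in>str F. lo z c < hi z c))"

lemma zz_props: "zz \<in> F" "\<forall>c\<in>str F. lo zz c < hi zz c"
proof -
  have "\<exists>z. z \<in> F \<and> (\<forall>c\<in>str F. lo z c < hi z c)" using strict_point[OF Fface Fne] by blast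
  then have "zz \<in> F \<and> (\<forall>c\<in>str F. lo zz c < hi zz c)" unfolding zz_def by (rule someI_ex)
  then show "zz \<in> F" "\<forall>c\<in>str F. lo zz c < hi zz c" by auto
qed

lemma FP: "F \<subseteq> P" using Fface face_of_imp_subset by blast

lemma zz_P: "zz \<in> P" using zz_props(1) FP by blast

lemma zz_tight: "c \<in> Cs - str F \<Longrightarrow> lo zz c = hi zz c"
proof -
  assume c: "c \<in> Cs - str F"
  then have "lo zz c \<le> hi zz c" using zz_P by (auto simp: P_iff)
  moreover have "\<not> lo zz c < hi zz c" using c zz_props(1) by (auto simp: str_def)
  ultimately show "lo zz c = hi zz c" by simp
qed

lemma closure:
  assumes ij: "1 \<le> i" "1 \<le> j" "i + j < n" and A: "CA i j \<notin> str F" and B: "CB i j \<notin> str F"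
  shows "CA (i + 1) j \<notin> str F \<and> CB i (j + 1) \<notin> str F"
proof -
  have I0: "(i, j) \<in> I" "(i + 1, j) \<in> I" "(i, j + 1) \<in> I" using ij by (auto simp: I_iff)
  have "CA i j \<in> Cs - str F" using A I0 by (simp add: Cs_def)
  then have "lo zz (CA i j) = hi zz (CA i j)" by (rule zz_tight)
  then have e1: "v zz (i, j) = v zz (i, j + 1)" by simp
  have "CB i j \<in> Cs - str F" using B I0 by (simp add: Cs_def)
  then have "lo zz (CB i j) = hi zz (CB i j)" by (rule zz_tight)
  then have e2: "v zz (i + 1, j) = v zz (i, j)" by simp
  have l1: "v zz (i + 1, j) \<le> v zz (i + 1, j + 1)" using PA[OF zz_P I0(2)] by simp
  have l2: "v zz (i + 1, j + 1) \<le> v zz (i, j + 1)" using PB[OF zz_P I0(3)] by simp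
  have "\<not> lo zz (CA (i + 1) j) < hi zz (CA (i + 1) j)" using e1 e2 l1 l2 by simp
  moreover have "\<not> lo zz (CB i (j + 1)) < hi zz (CB i (j + 1))" using e1 e2 l1 l2 by simp
  ultimately show ?thesis using zz_props(2) by blast
qed

lemma K:
  "1 \<le> i \<Longrightarrow> 1 \<le> j \<Longrightarrow> i + j \<le> n \<Longrightarrow>
   (CA i j \<notin> str F \<longrightarrow> rt n (str F) (i, j) = rt n (str F) (i, j + 1)) \<and>
   (CB i j \<notin> str F \<longrightarrow> rt n (str F) (i, j) = rt n (str F) (i + 1, j))"
proof (induction "n - (i + j)" arbitrary: i j rule: less_induct)
  case less
  show ?case
  proof (intro conjI impI)
    assume "CA i j \<notin> str F"
    then show "rt n (str F) (i, j) = rt n (str F) (i, j + 1)" using rt_A less by blast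
  next
    assume B: "CB i j \<notin> str F"
    show "rt n (str F) (i, j) = rt n (str F) (i + 1, j)"
    proof (cases "CA i j \<in> str F")
      case True then show ?thesis using rt_B less B by blast
    next
      case A: False
      have r1: "rt n (str F) (i, j) = rt n (str F) (i, j + 1)" using rt_A less A by blast
      show ?thesis
      proof (cases "i + j < n")
        case False
        then have "rt n (str F) (i, j + 1) = None" "rt n (str F) (i + 1, j) = None" by (auto intro: rt_none)
        then show ?thesis using r1 by simp
      next
        case True
        have cl: "CA (i + 1) j \<notin> str F" "CB i (j + 1) \<notin> str F" using closure[OF less(2,3) True A B] by auto
        have "n - (i + (j + 1)) < n - (i + j)" using True by simp
        then have "rt n (str F) (i, j + 1) = rt n (str F) (i + 1, j + 1)"
          using less(1)[of i "j + 1"] less(2) True cl by simp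
        moreover have "rt n (str F) (i + 1, j) = rt n (str F) (i + 1, j + 1)"
          using rt_A[of "i + 1" j n "str F"] True less(2,3) cl by simp
        ultimately show ?thesis using r1 by simp
      qed
    qed
  qed
qed

definition inW :: "(nat \<times> nat \<Rightarrow> real) \<Rightarrow> bool" where
  "inW w \<longleftrightarrow> (\<forall>p. p \<notin> I \<longrightarrow> w p = 0) \<and> (\<forall>c\<in>Cs - str F. hlo w c = hhi w c)"

definition eb :: "nat \<times> nat \<Rightarrow> nat \<times> nat \<Rightarrow> real" where
  "eb d = (\<lambda>c. if rt n (str F) c = Some d then 1 else 0)"

lemma rt_I: "rt n (str F) c = Some d \<Longrightarrow> c \<in> I"
proof (rule ccontr)
  assume "rt n (str F) c = Some d" "c \<notin> I"
  then show False using rt_none[of "fst c" "snd c"] by (cases c) (auto simp: I_iff)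
qed

lemma rt_Dset: "rt n (str F) c = Some d \<Longrightarrow> d \<in> Dset F"
  using rt_D[of n "str F" c d] by (cases d) (auto simp: Dset_def I_iff)

lemma hv_eb: "hv (eb d) c = eb d c"
proof -
  obtain i j where c: "c = (i, j)" by (cases c)
  show ?thesis
  proof (cases "i + j = n + 1")
    case True
    then have "c \<notin> I" using c by (simp add: I_iff)
    then have "eb d c = 0" using rt_I[of c d] by (auto simp: eb_def)
    then show ?thesis using True c by (simp add: hv_def)
  next
    case False then show ?thesis using c by (simp add: hv_def)
  qed
qed

lemma eb_inW: "inW (eb d)"
  unfolding inW_def
proof (intro conjI allI impI ballI)
  fix p assume "p \<notin> I" then show "eb d p = 0" using rt_I[of p d] by (auto simp: eb_def)
next
  fix c assume c: "c \<in> Cs - str F"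
  show "hlo (eb d) c = hhi (eb d) c"
  proof (cases c)
    case (CA i j)
    then have ij: "1 \<le> i" "1 \<le> j" "i + j \<le> n" "CA i j \<notin> str F" using c by (auto simp: Cs_def I_iff)
    then have "rt n (str F) (i, j) = rt n (str F) (i, j + 1)" using K by blast
    then show ?thesis using CA by (simp add: hv_eb) (simp add: eb_def)
  next
    case (CB i j)
    then have ij: "1 \<le> i" "1 \<le> j" "i + j \<le> n" "CB i j \<notin> str F" using c by (auto simp: Cs_def I_iff)
    then have "rt n (str F) (i, j) = rt n (str F) (i + 1, j)" using K by blast
    then show ?thesis using CB by (simp add: hv_eb) (simp add: eb_def)
  qed
qed

lemma decomp:
  assumes w: "inW w"
  shows "1 \<le> i \<Longrightarrow> 1 \<le> j \<Longrightarrow> i + j \<le> n + 1 \<Longrightarrow>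
    hv w (i, j) = (case rt n (str F) (i, j) of None \<Rightarrow> 0 | Some d \<Rightarrow> w d)"
proof (induction "n + 1 - (i + j)" arbitrary: i j rule: less_induct)
  case less
  show ?case
  proof (cases "i + j \<le> n")
    case False
    then have "i + j = n + 1" using less by simp
    then show ?thesis using rt_none[of i j n] by (simp add: hv_def)
  next
    case inI: True
    have ijI: "(i, j) \<in> I" using less inI by (simp add: I_iff)
    show ?thesis
    proof (cases "CA i j \<in> str F")
      case False
      then have "CA i j \<in> Cs - str F" using ijI by (simp add: Cs_def)
      then have "hlo w (CA i j) = hhi w (CA i j)" using w unfolding inW_def by blast
      then have "hv w (i, j) = hv w (i, j + 1)" by simp
      moreover have "rt n (str F) (i, j) = rt n (str F) (i, j + 1)" using rt_A less inI False by blast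
      moreover have "hv w (i, j + 1) = (case rt n (str F) (i, j + 1) of None \<Rightarrow> 0 | Some d \<Rightarrow> w d)"
        using less(1)[of i "j + 1"] less(2,3) inI by simp
      ultimately show ?thesis by simp
    next
      case caS: True
      show ?thesis
      proof (cases "CB i j \<in> str F")
        case False
        then have "CB i j \<in> Cs - str F" using ijI by (simp add: Cs_def)
        then have "hlo w (CB i j) = hhi w (CB i j)" using w unfolding inW_def by blast
        then have "hv w (i + 1, j) = hv w (i, j)" by simp
        moreover have "rt n (str F) (i, j) = rt n (str F) (i + 1, j)" using rt_B less inI caS False by blast
        moreover have "hv w (i + 1, j) = (case rt n (str F) (i + 1, j) of None \<Rightarrow> 0 | Some d \<Rightarrow> w d)"
          using less(1)[of "i + 1" j] less(2,3) inI by simp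
        ultimately show ?thesis by simp
      next
        case True
        then have "rt n (str F) (i, j) = Some (i, j)" using rt_self less inI caS by blast
        then show ?thesis using inI by (simp add: hv_def)
      qed
    qed
  qed
qed

lemma finite_Dset: "finite (Dset F)"
  using finite_I by (rule finite_subset[rotated]) (auto simp: Dset_def)

lemma w_sum:
  assumes w: "inW w"
  shows "w = (\<Sum>d\<in>Dset F. w d *\<^sub>R eb d)"
proof (rule ext)
  fix c :: "nat \<times> nat"
  obtain i j where c: "c = (i, j)" by (cases c)
  have rhs: "(\<Sum>d\<in>Dset F. w d *\<^sub>R eb d) c = (\<Sum>d\<in>Dset F. (if rt n (str F) c = Some d then w d else 0))"
    by (auto simp: sum_fun_apply eb_def intro!: sum.cong)
  show "w c = (\<Sum>d\<in>Dset F. w d *\<^sub>R eb d) c"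
  proof (cases "c \<in> I")
    case False
    then have "w c = 0" using w unfolding inW_def by blast
    moreover have "rt n (str F) c = None" using False rt_I by (cases "rt n (str F) c") auto
    ultimately show ?thesis using rhs by simp
  next
    case True
    then have ij: "1 \<le> i" "1 \<le> j" "i + j \<le> n" using c by (auto simp: I_iff)
    have "w c = hv w c" using ij c by (simp add: hv_def)
    also have "\<dots> = (case rt n (str F) c of None \<Rightarrow> 0 | Some d \<Rightarrow> w d)" using decomp[OF w, of i j] ij c by simp
    also have "\<dots> = (\<Sum>d\<in>Dset F. (if rt n (str F) c = Some d then w d else 0))"
    proof (cases "rt n (str F) c")
      case None then show ?thesis by simp
    next
      case (Some d0)
      then have "d0 \<in> Dset F" using rt_Dset by blast
      then show ?thesis using Some finite_Dset by (simp add: sum.delta)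
    qed
    finally show ?thesis using rhs by simp
  qed
qed

definition Dl :: "(nat \<times> nat \<Rightarrow> real) set" where
  "Dl = {y - x | x y. x \<in> F \<and> y \<in> F}"

lemma F_FS: "F = FS (str F)" using face_char[OF Fface Fne] .

lemma Dl_inW: "\<delta> \<in> Dl \<Longrightarrow> inW \<delta>"
proof -
  assume "\<delta> \<in> Dl"
  then obtain x y where xy: "\<delta> = y - x" "x \<in> F" "y \<in> F" by (auto simp: Dl_def)
  have xF: "x \<in> FS (str F)" "y \<in> FS (str F)" using xy F_FS by auto
  show "inW \<delta>" unfolding inW_def
  proof (intro conjI allI impI ballI)
    fix p assume "p \<notin> I" then show "\<delta> p = 0" using xF xy by (cases p) (auto simp: FS_def P_iff)
  next
    fix c assume c: "c \<in> Cs - str F"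
    then have "lo x c = hi x c" "lo y c = hi y c" using xF by (auto simp: FS_def)
    then show "hlo \<delta> c = hhi \<delta> c" using xy lo_diff[of y c x] hi_diff[of y c x] by simp
  qed
qed

lemma eb_span: "eb d \<in> span Dl"
proof -
  have w: "\<forall>p. p \<notin> I \<longrightarrow> eb d p = 0" "\<forall>c\<in>Cs - str F. hlo (eb d) c = hhi (eb d) c"
    using eb_inW by (auto simp: inW_def)
  have zt: "\<forall>c\<in>Cs - str F. lo zz c = hi zz c" using zz_tight by blast
  obtain e where e: "e > 0" "zz + e *\<^sub>R eb d \<in> FS (str F)"
    using pert[OF str_sub zz_P zz_props(2) zt w] by blast
  then have "zz + e *\<^sub>R eb d \<in> F" using F_FS by simp
  then have "(zz + e *\<^sub>R eb d) - zz \<in> Dl" using zz_props(1) unfolding Dl_def by blast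
  then have "e *\<^sub>R eb d \<in> Dl" by simp
  then have "(1 / e) *\<^sub>R (e *\<^sub>R eb d) \<in> span Dl" by (intro span_scale span_base)
  then show ?thesis using e by simp
qed

lemma eb_inj: "inj_on eb (Dset F)"
proof (rule inj_onI)
  fix d1 d2 assume d: "d1 \<in> Dset F" "d2 \<in> Dset F" "eb d1 = eb d2"
  have "rt n (str F) d1 = Some d1" using d(1) rt_self by (cases d1) (auto simp: Dset_def I_iff)
  then have "eb d1 d1 = 1" by (simp add: eb_def)
  then have "eb d2 d1 = 1" using d(3) by simp
  then have "rt n (str F) d1 = Some d2" by (simp add: eb_def split: if_splits)
  then show "d1 = d2" using \<open>rt n (str F) d1 = Some d1\<close> by simp
qed

lemma eb_indep: "independent (eb ` Dset F)"
proof (rule independent_if_scalars_zero)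
  show "finite (eb ` Dset F)" using finite_Dset by simp
  fix f x assume s: "(\<Sum>x\<in>eb ` Dset F. f x *\<^sub>R x) = 0" and x: "x \<in> eb ` Dset F"
  then obtain d0 where d0: "d0 \<in> Dset F" "x = eb d0" by blast
  have rs: "rt n (str F) d0 = Some d0" using d0(1) rt_self by (cases d0) (auto simp: Dset_def I_iff)
  have "0 = (\<Sum>x\<in>eb ` Dset F. f x *\<^sub>R x) d0" using s by simp
  also have "\<dots> = (\<Sum>x\<in>eb ` Dset F. f x * x d0)" by (simp add: sum_fun_apply)
  also have "\<dots> = (\<Sum>d\<in>Dset F. f (eb d) * eb d d0)" using sum.reindex[OF eb_inj] by simp
  also have "\<dots> = (\<Sum>d\<in>Dset F. (if d = d0 then f (eb d) else 0))"
    by (rule sum.cong) (auto simp: eb_def rs)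
  also have "\<dots> = f (eb d0)" using d0(1) finite_Dset by (simp add: sum.delta')
  finally show "f x = 0" using d0 by simp
qed

lemma affine_dim_eq: "affine_dim F = card (Dset F)"
proof -
  have "span (eb ` Dset F) = span Dl"
    unfolding span_eq
  proof
    show "eb ` Dset F \<subseteq> span Dl" using eb_span by blast
    show "Dl \<subseteq> span (eb ` Dset F)"
    proof
      fix \<delta> assume "\<delta> \<in> Dl"
      then have "\<delta> = (\<Sum>d\<in>Dset F. \<delta> d *\<^sub>R eb d)" using w_sum Dl_inW by blast
      also have "\<dots> \<in> span (eb ` Dset F)" by (intro span_sum span_scale span_base) auto
      finally show "\<delta> \<in> span (eb ` Dset F)" .
    qed
  qed
  then have "dim Dl = card (eb ` Dset F)" using dim_eq_card eb_indep by blast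
  also have "\<dots> = card (Dset F)" using card_image[OF eb_inj] .
  finally show ?thesis by (simp add: affine_dim_def Dl_def)
qed

end
end

theorem lemma2p6:
  fixes k :: "nat list" and lam :: "nat \<Rightarrow> real" and n :: nat
  assumes "k \<noteq> []"
    and "\<forall>a \<in> set k. 0 < a"
    and "n = sum_list k"
    and "\<forall>l \<in> {1..length k}. \<forall>a \<in> {psum k (l - 1) <.. psum k l}. \<forall>b \<in> {psum k (l - 1) <.. psum k l}.
           lam a = lam b"
    and "\<forall>l \<in> {1..<length k}. lam (psum k l) > lam (psum k l + 1)"
  shows "bij_betw (phi n lam) (nonempty_faces (GT_polytope n lam)) (Gamma_faces k) \<and>
         (\<forall>F \<in> nonempty_faces (GT_polytope n lam). \<forall>G \<in> nonempty_faces (GT_polytope n lam).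
            F \<subseteq> G \<longleftrightarrow> subgraph_le (phi n lam F) (phi n lam G)) \<and>
         (\<forall>F \<in> nonempty_faces (GT_polytope n lam).
            graph_dim (phi n lam F) = int (affine_dim F))"
proof -
  have G: "GT k lam n" using assms unfolding GT_def by blast
  interpret GT k lam n by (rule G)
  have ord: "\<forall>F \<in> nonempty_faces P. \<forall>G \<in> nonempty_faces P.
            F \<subseteq> G \<longleftrightarrow> subgraph_le (phi n lam F) (phi n lam G)"
    using order_iff by (auto simp: nonempty_faces_def)
  have inj: "inj_on (phi n lam) (nonempty_faces P)"
  proof (rule inj_onI)
    fix F G assume F: "F \<in> nonempty_faces P" and G: "G \<in> nonempty_faces P" and e: "phi n lam F = phi n lam G"
    have "subgraph_le (phi n lam F) (phi n lam G)" "subgraph_le (phi n lam G) (phi n lam F)"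
      using e by (auto simp: subgraph_le_def)
    then show "F = G" using ord F G by blast
  qed
  have img: "phi n lam ` nonempty_faces P = Gamma_faces k"
  proof
    show "phi n lam ` nonempty_faces P \<subseteq> Gamma_faces k"
    proof
      fix H assume "H \<in> phi n lam ` nonempty_faces P"
      then obtain F where F: "F \<in> nonempty_faces P" "H = phi n lam F" by blast
      then have "F face_of P" "F \<noteq> {}" by (auto simp: nonempty_faces_def)
      then show "H \<in> Gamma_faces k" using phi_in_Gamma F(2) by blast
    qed
    show "Gamma_faces k \<subseteq> phi n lam ` nonempty_faces P"
    proof
      fix H assume "H \<in> Gamma_faces k"
      then obtain F where "F \<in> nonempty_faces P" "phi n lam F = H" using surj by blast
      then show "H \<in> phi n lam ` nonempty_faces P" by blast
    qed
  qed
  have dimeq: "\<forall>F \<in> nonempty_faces P. graph_dim (phi n lam F) = int (affine_dim F)"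
  proof
    fix F assume "F \<in> nonempty_faces P"
    then have F: "F face_of P" "F \<noteq> {}" by (auto simp: nonempty_faces_def)
    have "graph_dim (phi n lam F) = int (card (Dset F))"
      using graph_dim_eq F face_of_imp_subset by blast
    also have "\<dots> = int (affine_dim F)" using affine_dim_eq[OF F] by simp
    finally show "graph_dim (phi n lam F) = int (affine_dim F)" .
  qed
  show ?thesis using inj img ord dimeq by (simp add: bij_betw_def)
qed

end
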